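(* Let $j\in\mathbb Z$, and let $\lambda,\mu$ be partitions such that $\lambda$ has an addable node $\mathfrak l$ in column $j$ and $\mu$ has an addable node $\mathfrak m$ in column $j$; set $\lambda^+=\lambda\cup\{\mathfrak l\}$, $\mu^+=\mu\cup\{\mathfrak m\}$. Suppose $\lambda\supseteq\mu^+$, and let $\mathfrak a=\mathfrak l-(1,1)$. Then: (1) there exists a cover-expansive Dyck tiling of $\lambda\setminus\mu$ in which $\mathfrak a$ has depth $1$ if and only if there exists a cover-expansive Dyck tiling of $\lambda\setminus\mu^+$; (2) there exists a cover-expansive Dyck tiling of $\lambda\setminus\mu$ in which $\mathfrak a$ has depth greater than $1$ if and only if there exists a cover-expansive Dyck tiling of $\lambda^+\setminus\mu^+$.
   Context: Partitions are identified with Young diagrams $\{(a,b)\in\mathbb N^2:b\le\lambda_a\}$; nodes are elements of $\mathbb N^2$; $(a,b)$ has height $\operatorname{ht}(a,b)=a+b$ and lies in column $b-a$ (smaller column = further left). An addable node of $\lambda$ is a node not in $\lambda$ whose addition gives a partition. $\mathtt{NE}(\mathfrak n)=\mathfrak n+(0,1)$, $\mathtt{SW}(\mathfrak n)=\mathfrak n-(0,1)$, $\mathtt{SE}(\mathfrak n)=\mathfrak n-(1,0)$. A tile is a finite nonempty set $t$ of nodes orderable $\mathfrak n_1,\dots,\mathfrak n_r$ with $\mathfrak n_{i+1}\in\{\mathtt{NE}(\mathfrak n_i),\mathtt{SE}(\mathfrak n_i)\}$; start = leftmost node, end = rightmost node; $\operatorname{ht}(t)$ = maximal height of its nodes; Dyck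 tile if start and end have height $\operatorname{ht}(t)$. The depth of $\mathfrak n\in t$ is $\operatorname{ht}(t)-\operatorname{ht}(\mathfrak n)$. A Dyck tiling of $\lambda\setminus\mu$ is a partition of it into Dyck tiles. It is cover-expansive if whenever $\mathfrak a,\mathtt{SE}(\mathfrak a)\in\lambda\setminus\mu$, the tile of $\mathtt{SE}(\mathfrak a)$ starts weakly left of the start of the tile of $\mathfrak a$, and whenever $\mathfrak a,\mathtt{SW}(\mathfrak a)\in\lambda\setminus\mu$, the tile of $\mathtt{SW}(\mathfrak a)$ ends weakly right of the end of the tile of $\mathfrak a$. *)

theory Defs
  imports Main
begin

text \<open>Nodes are pairs (a,b) of integers; genuine nodes of Young diagrams have a,b \<ge> 1
  (the paper's \<nat> = {1,2,...}).  Integers are used so that SE/SW never underflow.\<close>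

type_synonym node = "int \<times> int"

definition young :: "nat list \<Rightarrow> node set" where
  "young ls = {(a,b). 1 \<le> a \<and> a \<le> int (length ls) \<and> 1 \<le> b \<and> b \<le> int (ls ! nat (a - 1))}"

definition is_partition :: "node set \<Rightarrow> bool" where
  "is_partition D \<longleftrightarrow> (\<exists>ls. sorted_wrt (\<ge>) ls \<and> D = young ls)"

definition ht :: "node \<Rightarrow> int" where
  "ht n = fst n + snd n"

definition col :: "node \<Rightarrow> int" where
  "col n = snd n - fst n"

definition addable :: "node set \<Rightarrow> node \<Rightarrow> bool" where
  "addable D n \<longleftrightarrow> n \<notin> D \<and> is_partition (insert n D)"

definition NE :: "node \<Rightarrow> node" where "NE n = (fst n, snd n + 1)"
definition SW :: "node \<Rightarrow> node" where "SW n = (fst n, snd n - 1)"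
definition SE :: "node \<Rightarrow> node" where "SE n = (fst n - 1, snd n)"

definition is_tile :: "node set \<Rightarrow> bool" where
  "is_tile t \<longleftrightarrow> (\<exists>ns. ns \<noteq> [] \<and> t = set ns \<and>
     (\<forall>i. Suc i < length ns \<longrightarrow> ns ! Suc i \<in> {NE (ns ! i), SE (ns ! i)}))"

definition tile_start :: "node set \<Rightarrow> node" where
  "tile_start t = (THE n. n \<in> t \<and> (\<forall>m\<in>t. col n \<le> col m))"

definition tile_end :: "node set \<Rightarrow> node" where
  "tile_end t = (THE n. n \<in> t \<and> (\<forall>m\<in>t. col m \<le> col n))"

definition tile_ht :: "node set \<Rightarrow> int" where
  "tile_ht t = Max (ht ` t)"

definition is_dyck_tile :: "node set \<Rightarrow> bool" where
  "is_dyck_tile t \<longleftrightarrow> is_tile t \<and> ht (tile_start t) = tile_ht t \<and> ht (tile_end t) = tile_ht t"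

definition depth :: "node set \<Rightarrow> node \<Rightarrow> int" where
  "depth t n = tile_ht t - ht n"

definition dyck_tiling :: "node set set \<Rightarrow> node set \<Rightarrow> bool" where
  "dyck_tiling T S \<longleftrightarrow> (\<forall>t\<in>T. is_dyck_tile t) \<and> \<Union>T = S \<and>
     (\<forall>t\<in>T. \<forall>u\<in>T. t \<noteq> u \<longrightarrow> t \<inter> u = {})"

definition tile_of :: "node set set \<Rightarrow> node \<Rightarrow> node set" where
  "tile_of T n = (THE t. t \<in> T \<and> n \<in> t)"

definition cover_expansive :: "node set set \<Rightarrow> node set \<Rightarrow> bool" where
  "cover_expansive T S \<longleftrightarrow>
     (\<forall>a. a \<in> S \<and> SE a \<in> S \<longrightarrow> col (tile_start (tile_of T (SE a))) \<le> col (tile_start (tile_of T a))) \<and>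
     (\<forall>a. a \<in> S \<and> SW a \<in> S \<longrightarrow> col (tile_end (tile_of T a)) \<le> col (tile_end (tile_of T (SW a))))"

definition ce_dyck_tiling :: "node set set \<Rightarrow> node set \<Rightarrow> bool" where
  "ce_dyck_tiling T S \<longleftrightarrow> dyck_tiling T S \<and> cover_expansive T S"

end

theory Submission
  imports Defs
begin


lemma col_NE[simp]: "col (NE n) = col n + 1" by (simp add: col_def NE_def)
lemma col_SE[simp]: "col (SE n) = col n + 1" by (simp add: col_def SE_def)
lemma col_SW[simp]: "col (SW n) = col n - 1" by (simp add: col_def SW_def)

definition tileish :: "node set \<Rightarrow> bool" where
  "tileish t \<longleftrightarrow> finite t \<and> t \<noteq> {} \<and> inj_on col t \<and>
     (\<forall>x\<in>t. \<forall>y\<in>t. \<forall>c. col x \<le> c \<and> c \<le> col y \<longrightarrow> (\<exists>z\<in>t. col z = c)) \<and>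
     (\<forall>x\<in>t. \<forall>y\<in>t. col y = col x + 1 \<longrightarrow> y = NE x \<or> y = SE x)"

lemma tile_list_col:
  assumes "\<forall>i. Suc i < length ns \<longrightarrow> ns ! Suc i \<in> {NE (ns ! i), SE (ns ! i)}"
  shows "i < length ns \<Longrightarrow> col (ns ! i) = col (ns ! 0) + int i"
proof (induction i)
  case 0 then show ?case by simp
next
  case (Suc i)
  then have "ns ! Suc i \<in> {NE (ns ! i), SE (ns ! i)}" using assms by blast
  then have "col (ns ! Suc i) = col (ns ! i) + 1" by auto
  with Suc show ?case by simp
qed

lemma is_tile_tileish: assumes "is_tile t" shows "tileish t"
proof -
  obtain ns where ne: "ns \<noteq> []" and t: "t = set ns"
    and st: "\<forall>i. Suc i < length ns \<longrightarrow> ns ! Suc i \<in> {NE (ns ! i), SE (ns ! i)}"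
    using assms unfolding is_tile_def by blast
  have cn: "\<And>i. i < length ns \<Longrightarrow> col (ns ! i) = col (ns ! 0) + int i"
    using tile_list_col[OF st] by blast
  have inj: "inj_on col t"
  proof (rule inj_onI)
    fix x y assume "x \<in> t" "y \<in> t" "col x = col y"
    then obtain i k where "i < length ns" "x = ns ! i" "k < length ns" "y = ns ! k"
      using t by (auto simp: in_set_conv_nth)
    then show "x = y" using cn \<open>col x = col y\<close> by force
  qed
  have contig: "\<forall>x\<in>t. \<forall>y\<in>t. \<forall>c. col x \<le> c \<and> c \<le> col y \<longrightarrow> (\<exists>z\<in>t. col z = c)"
  proof (intro ballI allI impI)
    fix x y c assume "x \<in> t" "y \<in> t" and c: "col x \<le> c \<and> c \<le> col y"
    then obtain i k where i: "i < length ns" "x = ns ! i" and k: "k < length ns" "y = ns ! k"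
      using t by (auto simp: in_set_conv_nth)
    define m where "m = nat (c - col (ns ! 0))"
    have "int m = c - col (ns ! 0)" using c cn i unfolding m_def by auto
    moreover have "m < length ns" using c cn i k unfolding m_def by auto
    ultimately show "\<exists>z\<in>t. col z = c" using cn t by (intro bexI[of _ "ns ! m"]) auto
  qed
  have adj: "\<forall>x\<in>t. \<forall>y\<in>t. col y = col x + 1 \<longrightarrow> y = NE x \<or> y = SE x"
  proof (intro ballI impI)
    fix x y assume "x \<in> t" "y \<in> t" and c: "col y = col x + 1"
    then obtain i k where i: "i < length ns" "x = ns ! i" and k: "k < length ns" "y = ns ! k"
      using t by (auto simp: in_set_conv_nth)
    then have "k = Suc i" using cn c by force
    then show "y = NE x \<or> y = SE x" using st i k by auto
  qed
  show ?thesis unfolding tileish_def using inj contig adj ne t by auto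
qed

lemma tileish_is_tile: assumes "tileish t" shows "is_tile t"
proof -
  have fin: "finite t" and ne: "t \<noteq> {}" and inj: "inj_on col t"
    and contig: "\<And>x y c. x\<in>t \<Longrightarrow> y\<in>t \<Longrightarrow> col x \<le> c \<Longrightarrow> c \<le> col y \<Longrightarrow> (\<exists>z\<in>t. col z = c)"
    and adj: "\<And>x y. x\<in>t \<Longrightarrow> y\<in>t \<Longrightarrow> col y = col x + 1 \<Longrightarrow> y = NE x \<or> y = SE x"
    using assms unfolding tileish_def by blast+
  define p where "p = Min (col ` t)"
  define q where "q = Max (col ` t)"
  obtain xp where xp: "xp \<in> t" "col xp = p" using fin ne unfolding p_def
    by (metis (mono_tags, lifting) Min_in finite_imageI image_iff image_is_empty)
  obtain xq where xq: "xq \<in> t" "col xq = q" using fin ne unfolding q_def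
    by (metis (mono_tags, lifting) Max_in finite_imageI image_iff image_is_empty)
  have pq: "\<And>z. z \<in> t \<Longrightarrow> p \<le> col z \<and> col z \<le> q" using fin unfolding p_def q_def by auto
  define g where "g k = (THE z. z \<in> t \<and> col z = p + int k)" for k
  define N where "N = nat (q - p) + 1"
  have g: "g k \<in> t \<and> col (g k) = p + int k" if "k < N" for k
  proof -
    have "p \<le> p + int k" "p + int k \<le> q" using that pq[OF xp(1)] xp unfolding N_def by auto
    then obtain z where z: "z \<in> t" "col z = p + int k"
      using contig[OF xp(1) xq(1), of "p + int k"] xp xq by auto
    have "g k = z" unfolding g_def
    proof (rule the_equality)
      show "z \<in> t \<and> col z = p + int k" using z by simp
      fix y assume "y \<in> t \<and> col y = p + int k"
      then show "y = z" using z inj by (metis inj_onD)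
    qed
    then show ?thesis using z by simp
  qed
  define ns where "ns = map g [0..<N]"
  have "ns \<noteq> []" unfolding ns_def N_def by simp
  moreover have "t = set ns"
  proof
    show "set ns \<subseteq> t" using g unfolding ns_def by auto
    show "t \<subseteq> set ns"
    proof
      fix z assume z: "z \<in> t"
      define k where "k = nat (col z - p)"
      have k: "k < N" "int k = col z - p" using pq[OF z] unfolding k_def N_def by auto
      have "g k = z" using g[OF k(1)] k z inj by (auto dest: inj_onD)
      then show "z \<in> set ns" using k unfolding ns_def by force
    qed
  qed
  moreover have "\<forall>i. Suc i < length ns \<longrightarrow> ns ! Suc i \<in> {NE (ns ! i), SE (ns ! i)}"
  proof (intro allI impI)
    fix i assume "Suc i < length ns"
    then have i: "Suc i < N" by (simp add: ns_def)
    have "ns ! i = g i" "ns ! Suc i = g (Suc i)" using i unfolding ns_def by auto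
    moreover have "g (Suc i) = NE (g i) \<or> g (Suc i) = SE (g i)"
      using adj g[OF i] g[of i] i by auto
    ultimately show "ns ! Suc i \<in> {NE (ns ! i), SE (ns ! i)}" by auto
  qed
  ultimately show ?thesis unfolding is_tile_def by blast
qed

lemma tile_start_char:
  assumes "finite t" "t \<noteq> {}" "inj_on col t"
  shows "tile_start t \<in> t \<and> (\<forall>y\<in>t. col (tile_start t) \<le> col y)"
proof -
  obtain z where z: "z \<in> t" "col z = Min (col ` t)" using assms
    by (metis (mono_tags, lifting) Min_in finite_imageI image_iff image_is_empty)
  have zm: "\<forall>y\<in>t. col z \<le> col y" using z assms by auto
  have "tile_start t = z" unfolding tile_start_def
  proof (rule the_equality)
    show "z \<in> t \<and> (\<forall>m\<in>t. col z \<le> col m)" using z zm by auto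
    fix n assume "n \<in> t \<and> (\<forall>m\<in>t. col n \<le> col m)"
    then show "n = z" using z zm assms(3) by (meson antisym inj_onD)
  qed
  then show ?thesis using z zm by simp
qed

lemma tile_end_char:
  assumes "finite t" "t \<noteq> {}" "inj_on col t"
  shows "tile_end t \<in> t \<and> (\<forall>y\<in>t. col y \<le> col (tile_end t))"
proof -
  obtain z where z: "z \<in> t" "col z = Max (col ` t)" using assms
    by (metis (mono_tags, lifting) Max_in finite_imageI image_iff image_is_empty)
  have zm: "\<forall>y\<in>t. col y \<le> col z" using z assms by auto
  have "tile_end t = z" unfolding tile_end_def
  proof (rule the_equality)
    show "z \<in> t \<and> (\<forall>m\<in>t. col m \<le> col z)" using z zm by auto
    fix n assume "n \<in> t \<and> (\<forall>m\<in>t. col m \<le> col n)"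
    then show "n = z" using z zm assms(3) by (meson antisym inj_onD)
  qed
  then show ?thesis using z zm by simp
qed

lemma tile_of_eq:
  assumes "dyck_tiling T S" "t \<in> T" "x \<in> t" shows "tile_of T x = t"
  unfolding tile_of_def
  by (rule the_equality) (use assms in \<open>auto simp: dyck_tiling_def\<close>)

lemma tile_of_in:
  assumes "dyck_tiling T S" "x \<in> S" shows "tile_of T x \<in> T \<and> x \<in> tile_of T x"
proof -
  obtain t where "t \<in> T" "x \<in> t" using assms unfolding dyck_tiling_def by blast
  then show ?thesis using tile_of_eq[OF assms(1)] by simp
qed


definition Sh :: "(int \<Rightarrow> int) \<Rightarrow> (int \<Rightarrow> int) \<Rightarrow> node set" where
  "Sh A B = {x. A (col x) \<le> fst x \<and> fst x < B (col x)}"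
definition lay :: "(int \<Rightarrow> int) \<Rightarrow> node \<Rightarrow> int" where "lay A x = fst x - A (col x)"
definition cell :: "(int \<Rightarrow> int) \<Rightarrow> int \<Rightarrow> int \<Rightarrow> node" where "cell A i c = (A c + i, A c + i + c)"
definition stepf :: "(int \<Rightarrow> int) \<Rightarrow> bool" where "stepf A \<longleftrightarrow> (\<forall>c. A (c+1) = A c \<or> A (c+1) = A c - 1)"
definition dn :: "node \<Rightarrow> node" where "dn x = (fst x - 1, snd x - 1)"

lemma fst_NE[simp]: "fst (NE x) = fst x" by (simp add: NE_def)
lemma fst_SE[simp]: "fst (SE x) = fst x - 1" by (simp add: SE_def)
lemma fst_SW[simp]: "fst (SW x) = fst x" by (simp add: SW_def)
lemma fst_dn[simp]: "fst (dn x) = fst x - 1" by (simp add: dn_def)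
lemma col_cell[simp]: "col (cell A i c) = c" by (simp add: col_def cell_def)
lemma lay_cell[simp]: "lay A (cell A i c) = i" by (simp add: lay_def cell_def col_def)
lemma cell_lay[simp]: "cell A (lay A x) (col x) = x" by (simp add: lay_def cell_def col_def)
lemma cell_in_Sh: "cell A i c \<in> Sh A B \<longleftrightarrow> 0 \<le> i \<and> i < B c - A c" by (auto simp: Sh_def cell_def col_def)
lemma ht_cell: "ht (cell A i c) = 2 * A c + c + 2 * i" by (simp add: ht_def cell_def)
lemma col_dn[simp]: "col (dn x) = col x" by (simp add: col_def dn_def)
lemma lay_dn[simp]: "lay A (dn x) = lay A x - 1" by (simp add: lay_def)
lemma NE_dn: "NE (dn x) = SE x" by (simp add: NE_def dn_def SE_def)
lemma SW_SE: "SW (SE x) = dn x" by (simp add: SW_def dn_def SE_def)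
lemma lay_NE: "lay A (NE x) = lay A x + A (col x) - A (col x + 1)" by (simp add: lay_def)
lemma lay_SE: "lay A (SE x) = lay A x - 1 + A (col x) - A (col x + 1)" by (simp add: lay_def)
lemma lay_SW: "lay A (SW x) = lay A x + A (col x) - A (col x - 1)" by (simp add: lay_def)
lemma in_Sh: "x \<in> Sh A B \<longleftrightarrow> 0 \<le> lay A x \<and> lay A x < B (col x) - A (col x)"
  by (auto simp: Sh_def lay_def)
lemma col_eq_lay_eq: "col x = col y \<Longrightarrow> lay A x = lay A y \<Longrightarrow> x = y"
  by (metis cell_lay)
lemma NE_ne_SE: "NE x \<noteq> SE x" by (simp add: NE_def SE_def prod_eq_iff)
lemma dn_ne: "dn x \<noteq> x" by (simp add: dn_def prod_eq_iff)
lemma SE_inj: "SE x = SE y \<Longrightarrow> x = y" by (simp add: SE_def prod_eq_iff)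
lemma NE_inj: "NE x = NE y \<Longrightarrow> x = y" by (simp add: NE_def prod_eq_iff)
lemma stepf_D: "stepf A \<Longrightarrow> A (c+1) = A c \<or> A (c+1) = A c - 1" by (simp add: stepf_def)
lemma stepf_D': "stepf A \<Longrightarrow> A c = A (c - 1) \<or> A c = A (c - 1) - 1"
  using stepf_D[of A "c - 1"] by simp

lemma tileish_pred:
  assumes "tileish t" "y \<in> t" "col (tile_start t) < col y"
  shows "\<exists>z\<in>t. col y = col z + 1 \<and> (y = NE z \<or> y = SE z)"
proof -
  have s: "tile_start t \<in> t" using tile_start_char assms(1) unfolding tileish_def by blast
  have c: "\<forall>x\<in>t. \<forall>y\<in>t. \<forall>c. col x \<le> c \<and> c \<le> col y \<longrightarrow> (\<exists>z\<in>t. col z = c)"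
    using assms(1) unfolding tileish_def by blast
  have "col (tile_start t) \<le> col y - 1 \<and> col y - 1 \<le> col y" using assms(3) by simp
  then obtain z where z: "z \<in> t" "col z = col y - 1"
    using c s assms(2) by blast
  then show ?thesis using assms unfolding tileish_def by force
qed

lemma tileish_succ:
  assumes "tileish t" "x \<in> t" "col x < col (tile_end t)"
  shows "NE x \<in> t \<or> SE x \<in> t"
proof -
  have s: "tile_end t \<in> t" using tile_end_char assms(1) unfolding tileish_def by blast
  have c: "\<forall>x\<in>t. \<forall>y\<in>t. \<forall>c. col x \<le> c \<and> c \<le> col y \<longrightarrow> (\<exists>z\<in>t. col z = c)"
    using assms(1) unfolding tileish_def by blast
  have "col x \<le> col x + 1 \<and> col x + 1 \<le> col (tile_end t)" using assms(3) by simp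
  then obtain z where z: "z \<in> t" "col z = col x + 1"
    using c s assms(2) by blast
  then show ?thesis using assms unfolding tileish_def by force
qed

lemma tileish_start: "tileish t \<Longrightarrow> tile_start t \<in> t \<and> (\<forall>y\<in>t. col (tile_start t) \<le> col y)"
  using tile_start_char unfolding tileish_def by blast
lemma tileish_end: "tileish t \<Longrightarrow> tile_end t \<in> t \<and> (\<forall>y\<in>t. col y \<le> col (tile_end t))"
  using tile_end_char unfolding tileish_def by blast
lemma tileish_inj: "tileish t \<Longrightarrow> x \<in> t \<Longrightarrow> y \<in> t \<Longrightarrow> col x = col y \<Longrightarrow> x = y"
  unfolding tileish_def by (meson inj_onD)

locale cectx =
  fixes A B :: "int \<Rightarrow> int" and T :: "node set set"
  assumes stA: "stepf A" and stB: "stepf B"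
    and ce: "ce_dyck_tiling T (Sh A B)" and AleB: "\<And>c. A c \<le> B c"
begin

abbreviation "S \<equiv> Sh A B"

lemma dt: "dyck_tiling T S" using ce unfolding ce_dyck_tiling_def by blast
lemma tT: "t \<in> T \<Longrightarrow> tileish t"
  using dt is_tile_tileish unfolding dyck_tiling_def is_dyck_tile_def by blast
lemma tS: "t \<in> T \<Longrightarrow> x \<in> t \<Longrightarrow> x \<in> S"
  using dt unfolding dyck_tiling_def by blast
lemma tof: "t \<in> T \<Longrightarrow> x \<in> t \<Longrightarrow> tile_of T x = t" using tile_of_eq[OF dt] by blast
lemma tofin: "x \<in> S \<Longrightarrow> tile_of T x \<in> T \<and> x \<in> tile_of T x" using tile_of_in[OF dt] by blast
lemma same_tile: "t \<in> T \<Longrightarrow> u \<in> T \<Longrightarrow> x \<in> t \<Longrightarrow> x \<in> u \<Longrightarrow> t = u"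
  using dt unfolding dyck_tiling_def by blast
lemma ce1: "a \<in> S \<Longrightarrow> SE a \<in> S \<Longrightarrow> col (tile_start (tile_of T (SE a))) \<le> col (tile_start (tile_of T a))"
  using ce unfolding ce_dyck_tiling_def cover_expansive_def by blast
lemma ce2: "a \<in> S \<Longrightarrow> SW a \<in> S \<Longrightarrow> col (tile_end (tile_of T a)) \<le> col (tile_end (tile_of T (SW a)))"
  using ce unfolding ce_dyck_tiling_def cover_expansive_def by blast

lemma L1_step:
  assumes "t \<in> T" "x \<in> t" "NE x \<in> t" "A (col x + 1) = A (col x) - 1"
  shows "\<exists>u\<in>T. dn x \<in> u \<and> NE (dn x) \<in> u"
proof -
  have xS: "x \<in> S" using tS assms by blast
  have seS: "SE x \<in> S" using xS assms(4) stepf_D[OF stB, of "col x"]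
    by (auto simp: Sh_def)
  define u where "u = tile_of T (SE x)"
  have u: "u \<in> T" "SE x \<in> u" using tofin[OF seS] u_def by auto
  have "col (tile_start u) \<le> col (tile_start t)" using ce1[OF xS seS] tof[OF assms(1,2)] u_def by simp
  also have "\<dots> \<le> col x" using tileish_start[OF tT[OF assms(1)]] assms(2) by blast
  finally have "col (tile_start u) < col (SE x)" by simp
  then obtain z where z: "z \<in> u" "col (SE x) = col z + 1" "SE x = NE z \<or> SE x = SE z"
    using tileish_pred[OF tT[OF u(1)] u(2)] by blast
  show ?thesis
  proof (cases "SE x = SE z")
    case True
    then have "z = x" using SE_inj by blast
    then have "u = t" using same_tile assms u z by blast
    then have "SE x = NE x" using tileish_inj[OF tT[OF assms(1)]] u assms by simp
    then show ?thesis using NE_ne_SE by metis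
  next
    case False
    then have "SE x = NE z" using z by blast
    then have "z = dn x" by (metis NE_dn NE_inj)
    then show ?thesis using z u NE_dn by metis
  qed
qed

lemma L2_step:
  assumes "t \<in> T" "x \<in> t" "SE x \<in> t" "A (col x + 1) = A (col x)"
  shows "\<exists>v\<in>T. dn x \<in> v \<and> SE (dn x) \<in> v"
proof -
  have xS: "x \<in> S" using tS assms by blast
  have seS: "SE x \<in> S" using tS assms by blast
  have dS: "dn x \<in> S" using xS seS assms(4) by (auto simp: Sh_def)
  define v where "v = tile_of T (dn x)"
  have v: "v \<in> T" "dn x \<in> v" using tofin[OF dS] v_def by auto
  have "col (SE x) \<le> col (tile_end t)" using tileish_end[OF tT[OF assms(1)]] assms(3) by blast
  also have "\<dots> \<le> col (tile_end v)"
    using ce2[OF seS] dS tof[OF assms(1,3)] v_def SW_SE by simp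
  finally have "col (dn x) < col (tile_end v)" by simp
  then have "NE (dn x) \<in> v \<or> SE (dn x) \<in> v" using tileish_succ[OF tT[OF v(1)] v(2)] by blast
  moreover have "NE (dn x) \<notin> v"
  proof
    assume "NE (dn x) \<in> v"
    then have "SE x \<in> v" using NE_dn by metis
    then have "v = t" using same_tile assms v by blast
    then have "dn x = x" using tileish_inj[OF tT[OF assms(1)]] v assms by simp
    then show False using dn_ne by metis
  qed
  ultimately show ?thesis using v by blast
qed

lemma noL1: "t \<in> T \<Longrightarrow> x \<in> t \<Longrightarrow> NE x \<in> t \<Longrightarrow> A (col x + 1) = A (col x) - 1 \<Longrightarrow> False"
proof (induction "nat (lay A x)" arbitrary: x t rule: less_induct)
  case less
  obtain u where u: "u \<in> T" "dn x \<in> u" "NE (dn x) \<in> u" using L1_step less.prems by blast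
  have "0 \<le> lay A (dn x)" using tS[OF u(1,2)] in_Sh by blast
  then have "nat (lay A (dn x)) < nat (lay A x)" by simp
  then show False using less.hyps[OF _ u] less.prems(4) by simp
qed

lemma noL2: "t \<in> T \<Longrightarrow> x \<in> t \<Longrightarrow> SE x \<in> t \<Longrightarrow> A (col x + 1) = A (col x) \<Longrightarrow> False"
proof (induction "nat (lay A x)" arbitrary: x t rule: less_induct)
  case less
  obtain u where u: "u \<in> T" "dn x \<in> u" "SE (dn x) \<in> u" using L2_step less.prems by blast
  have "0 \<le> lay A (dn x)" using tS[OF u(1,2)] in_Sh by blast
  then have "nat (lay A (dn x)) < nat (lay A x)" by simp
  then show False using less.hyps[OF _ u] less.prems(4) by simp
qed

lemma lay_adj:
  assumes "t \<in> T" "x \<in> t" "y \<in> t" "col y = col x + 1"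
  shows "lay A y = lay A x"
proof -
  have "y = NE x \<or> y = SE x" using tT[OF assms(1)] assms unfolding tileish_def by blast
  then show ?thesis
  proof
    assume y: "y = NE x"
    then have "A (col x + 1) = A (col x)" using noL1[OF assms(1,2)] assms(3) stepf_D[OF stA] by blast
    then show ?thesis using y lay_NE by simp
  next
    assume y: "y = SE x"
    then have "A (col x + 1) = A (col x) - 1" using noL2[OF assms(1,2)] assms(3) stepf_D[OF stA] by blast
    then show ?thesis using y lay_SE by simp
  qed
qed

lemma lay_const_aux:
  assumes "t \<in> T" "x \<in> t" "y \<in> t" "col x \<le> col y"
  shows "lay A y = lay A x"
  using assms(3,4)
proof (induction "nat (col y - col x)" arbitrary: y rule: less_induct)
  case less
  show ?case
  proof (cases "col y = col x")
    case True then show ?thesis using tileish_inj[OF tT[OF assms(1)] assms(2) less.prems(1)] by simp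
  next
    case False
    then have "col (tile_start t) < col y"
      using tileish_start[OF tT[OF assms(1)]] assms(2) less.prems by force
    then obtain z where z: "z \<in> t" "col y = col z + 1"
      using tileish_pred[OF tT[OF assms(1)] less.prems(1)] by blast
    have "lay A z = lay A x" using less.hyps[of z] z less.prems False by simp
    then show ?thesis using lay_adj[OF assms(1) z(1) less.prems(1) z(2)] by simp
  qed
qed

lemma lay_const: "t \<in> T \<Longrightarrow> x \<in> t \<Longrightarrow> y \<in> t \<Longrightarrow> lay A y = lay A x"
  by (metis lay_const_aux linorder_le_cases)

lemma tile_cell: "t \<in> T \<Longrightarrow> x \<in> t \<Longrightarrow> y \<in> t \<Longrightarrow> y = cell A (lay A x) (col y)"
  using lay_const by (metis cell_lay)

lemma no_right:
  assumes "t \<in> T" "x \<in> t" "col x = col (tile_end t)" "cell A (lay A x) (col x + 1) \<in> S"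
  shows False
proof -
  define y where "y = cell A (lay A x) (col x + 1)"
  have xS: "x \<in> S" using tS assms by blast
  have yS: "y \<in> S" using assms y_def by simp
  have "y = NE x \<or> y = SE x"
    using stepf_D[OF stA, of "col x"] unfolding y_def
    by (auto simp: cell_def NE_def SE_def lay_def col_def prod_eq_iff)
  then show False
  proof
    assume yx: "y = SE x"
    define u where "u = tile_of T y"
    have u: "u \<in> T" "y \<in> u" using tofin[OF yS] u_def by auto
    have "col (tile_start u) \<le> col (tile_start t)" using ce1[OF xS] yS yx tof[OF assms(1,2)] u_def by simp
    also have "\<dots> \<le> col x" using tileish_start[OF tT[OF assms(1)]] assms(2) by blast
    finally have "col (tile_start u) < col y" using yx by simp
    then obtain z where z: "z \<in> u" "col y = col z + 1" "y = NE z \<or> y = SE z"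
      using tileish_pred[OF tT[OF u(1)] u(2)] by blast
    show False
    proof (cases "y = SE z")
      case True
      then have "z = x" using SE_inj yx by blast
      then have "u = t" using same_tile assms u z by blast
      then have "col y \<le> col (tile_end t)" using tileish_end[OF tT[OF assms(1)]] u by blast
      then show False using assms(3) y_def by simp
    next
      case False
      then have "z = dn x" using z yx by (metis NE_dn NE_inj)
      then have "lay A z = lay A y" using lay_const[OF u(1) u(2) z(1)] by simp
      then show False using \<open>z = dn x\<close> y_def by simp
    qed
  next
    assume yx: "y = NE x"
    have "SW y = x" using yx by (simp add: SW_def NE_def)
    define u where "u = tile_of T y"
    have u: "u \<in> T" "y \<in> u" using tofin[OF yS] u_def by auto
    have "col (tile_end u) \<le> col (tile_end t)" using ce2[OF yS] xS \<open>SW y = x\<close> tof[OF assms(1,2)] u_def by simp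
    moreover have "col y \<le> col (tile_end u)" using tileish_end[OF tT[OF u(1)]] u by blast
    ultimately show False using assms(3) y_def by simp
  qed
qed

lemma no_left:
  assumes "t \<in> T" "x \<in> t" "col x = col (tile_start t)" "cell A (lay A x) (col x - 1) \<in> S"
  shows False
proof -
  define z where "z = cell A (lay A x) (col x - 1)"
  have xS: "x \<in> S" using tS assms by blast
  have zS: "z \<in> S" using assms z_def by simp
  have "z = SW x \<or> SE z = x"
    using stepf_D'[OF stA, of "col x"] unfolding z_def
    by (auto simp: cell_def SW_def SE_def lay_def col_def prod_eq_iff)
  then show False
  proof
    assume zx: "z = SW x"
    define v where "v = tile_of T z"
    have v: "v \<in> T" "z \<in> v" using tofin[OF zS] v_def by auto
    have "col (tile_end t) \<le> col (tile_end v)" using ce2[OF xS] zS zx tof[OF assms(1,2)] v_def by simp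
    moreover have "col x \<le> col (tile_end t)" using tileish_end[OF tT[OF assms(1)]] assms(2) by blast
    ultimately have "col z < col (tile_end v)" using z_def by simp
    then have "NE z \<in> v \<or> SE z \<in> v" using tileish_succ[OF tT[OF v(1)] v(2)] by blast
    then show False
    proof
      assume "NE z \<in> v"
      then have "x \<in> v" using zx by (simp add: NE_def SW_def)
      then have "v = t" using same_tile assms v by blast
      then have "col (tile_start t) \<le> col z" using tileish_start[OF tT[OF assms(1)]] v by blast
      then show False using assms(3) z_def by simp
    next
      assume "SE z \<in> v"
      have "SE z = dn x" using zx by (simp add: SE_def SW_def dn_def)
      have "lay A (SE z) = lay A z" using lay_const[OF v(1) v(2) \<open>SE z \<in> v\<close>] .
      then have "lay A (dn x) = lay A z" using \<open>SE z = dn x\<close> by simp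
      then show False using z_def by simp
    qed
  next
    assume zx: "SE z = x"
    have "col (tile_start (tile_of T x)) \<le> col (tile_start (tile_of T z))" using ce1[OF zS] xS zx by simp
    also have "\<dots> \<le> col z" using tileish_start[OF tT] tofin[OF zS] by blast
    finally show False using tof[OF assms(1,2)] assms(3) z_def by simp
  qed
qed

end


definition nn :: "(int \<Rightarrow> int) \<Rightarrow> (int \<Rightarrow> int) \<Rightarrow> int \<Rightarrow> int" where "nn A B c = B c - A c"
definition phi :: "(int \<Rightarrow> int) \<Rightarrow> int \<Rightarrow> int" where "phi A c = 2 * A c + c"

definition LeftC :: "(int \<Rightarrow> int) \<Rightarrow> (int \<Rightarrow> int) \<Rightarrow> bool" where
  "LeftC n f \<longleftrightarrow> (\<forall>p c. p \<le> c \<and> (\<forall>c'. p \<le> c' \<and> c' \<le> c \<longrightarrow> n (p - 1) < n c') \<longrightarrow> f c \<le> f p)"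
definition RightC :: "(int \<Rightarrow> int) \<Rightarrow> (int \<Rightarrow> int) \<Rightarrow> bool" where
  "RightC n f \<longleftrightarrow> (\<forall>c q. c \<le> q \<and> (\<forall>c'. c \<le> c' \<and> c' \<le> q \<longrightarrow> n (q + 1) < n c') \<longrightarrow> f c \<le> f q)"

lemma cell_in_Sh_nn: "cell A i c \<in> Sh A B \<longleftrightarrow> 0 \<le> i \<and> i < nn A B c"
  by (simp add: cell_in_Sh nn_def)
lemma ht_cell_phi: "ht (cell A i c) = phi A c + 2 * i" by (simp add: ht_cell phi_def)

context cectx begin

lemma run_cells:
  assumes "t \<in> T" "x \<in> t" "col (tile_start t) \<le> c" "c \<le> col (tile_end t)"
  shows "cell A (lay A x) c \<in> t"
proof -
  have tt: "tileish t" using tT assms by blast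
  have "\<exists>z\<in>t. col z = c" using tt tileish_start[OF tt] tileish_end[OF tt] assms unfolding tileish_def by blast
  then obtain z where "z \<in> t" "col z = c" by blast
  then show ?thesis using tile_cell[OF assms(1,2)] by metis
qed

lemma dyck_ht:
  assumes "t \<in> T" "y \<in> t"
  shows "ht y \<le> ht (tile_start t) \<and> ht y \<le> ht (tile_end t) \<and> tile_ht t = ht (tile_start t)"
proof -
  have d: "is_dyck_tile t" using dt assms unfolding dyck_tiling_def by blast
  have "finite t" using tT[OF assms(1)] unfolding tileish_def by blast
  then have "ht y \<le> tile_ht t" unfolding tile_ht_def using assms(2) by simp
  then show ?thesis using d unfolding is_dyck_tile_def by simp
qed

lemma good_left: "LeftC (nn A B) (phi A)"
  unfolding LeftC_def
proof (intro allI impI)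
  fix p c assume a: "p \<le> c \<and> (\<forall>c'. p \<le> c' \<and> c' \<le> c \<longrightarrow> nn A B (p - 1) < nn A B c')"
  define i where "i = nn A B (p - 1)"
  have i0: "0 \<le> i" using AleB unfolding i_def nn_def by (simp add: algebra_simps)
  define y where "y = cell A i p"
  have yS: "y \<in> S" using a i0 unfolding y_def i_def cell_in_Sh_nn by auto
  define t where "t = tile_of T y"
  have t: "t \<in> T" "y \<in> t" using tofin[OF yS] t_def by auto
  have ly: "lay A y = i" using y_def by simp
  have tt: "tileish t" using tT[OF t(1)] .
  have sp: "col (tile_start t) \<le> p" "p \<le> col (tile_end t)"
    using tileish_start[OF tt] tileish_end[OF tt] t y_def by auto
  have s: "col (tile_start t) = p"
  proof (rule ccontr)
    assume "col (tile_start t) \<noteq> p"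
    then have "cell A i (p - 1) \<in> t" using run_cells[OF t, of "p - 1"] sp ly by simp
    then have "cell A i (p - 1) \<in> S" using tS t by blast
    then show False using i_def cell_in_Sh_nn by simp
  qed
  have e: "c \<le> col (tile_end t)"
  proof (rule ccontr)
    assume ne: "\<not> c \<le> col (tile_end t)"
    define w where "w = tile_end t"
    have w: "w \<in> t" using tileish_end[OF tt] w_def by blast
    have lw: "lay A w = i" using lay_const[OF t(1) t(2) w] ly by simp
    have "cell A i (col w + 1) \<in> S" using a ne sp i0 unfolding w_def i_def cell_in_Sh_nn by auto
    then show False using no_right[OF t(1) w] lw w_def by simp
  qed
  have "cell A i c \<in> t" using run_cells[OF t, of c] ly s e a by simp
  then have "ht (cell A i c) \<le> ht (tile_start t)" using dyck_ht t by blast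
  moreover have "tile_start t = cell A i p"
    using tile_cell[OF t(1) t(2)] tileish_start[OF tt] s ly by metis
  ultimately show "phi A c \<le> phi A p" by (simp add: ht_cell_phi)
qed

lemma good_right: "RightC (nn A B) (phi A)"
  unfolding RightC_def
proof (intro allI impI)
  fix c q assume a: "c \<le> q \<and> (\<forall>c'. c \<le> c' \<and> c' \<le> q \<longrightarrow> nn A B (q + 1) < nn A B c')"
  define i where "i = nn A B (q + 1)"
  have i0: "0 \<le> i" using AleB unfolding i_def nn_def by (simp add: algebra_simps)
  define y where "y = cell A i q"
  have yS: "y \<in> S" using a i0 unfolding y_def i_def cell_in_Sh_nn by auto
  define t where "t = tile_of T y"
  have t: "t \<in> T" "y \<in> t" using tofin[OF yS] t_def by auto
  have ly: "lay A y = i" using y_def by simp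
  have tt: "tileish t" using tT[OF t(1)] .
  have sp: "col (tile_start t) \<le> q" "q \<le> col (tile_end t)"
    using tileish_start[OF tt] tileish_end[OF tt] t y_def by auto
  have e: "col (tile_end t) = q"
  proof (rule ccontr)
    assume "col (tile_end t) \<noteq> q"
    then have "cell A i (q + 1) \<in> t" using run_cells[OF t, of "q + 1"] sp ly by simp
    then have "cell A i (q + 1) \<in> S" using tS t by blast
    then show False using i_def cell_in_Sh_nn by simp
  qed
  have s: "col (tile_start t) \<le> c"
  proof (rule ccontr)
    assume ne: "\<not> col (tile_start t) \<le> c"
    define w where "w = tile_start t"
    have w: "w \<in> t" using tileish_start[OF tt] w_def by blast
    have lw: "lay A w = i" using lay_const[OF t(1) t(2) w] ly by simp
    have "cell A i (col w - 1) \<in> S" using a ne sp i0 unfolding w_def i_def cell_in_Sh_nn by auto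
    then show False using no_left[OF t(1) w] lw w_def by simp
  qed
  have "cell A i c \<in> t" using run_cells[OF t, of c] ly s e a by simp
  then have "ht (cell A i c) \<le> ht (tile_end t)" using dyck_ht t by blast
  moreover have "tile_end t = cell A i q"
    using tile_cell[OF t(1) t(2)] tileish_end[OF tt] e ly by metis
  ultimately show "phi A c \<le> phi A q" by (simp add: ht_cell_phi)
qed

lemma depth_formula:
  assumes "t \<in> T" "x \<in> t" "s \<le> col x" "nn A B (s - 1) \<le> lay A x"
    "\<forall>c'. s \<le> c' \<and> c' \<le> col x \<longrightarrow> lay A x < nn A B c'"
  shows "depth t x = phi A s - phi A (col x)"
proof -
  define i where "i = lay A x"
  have tt: "tileish t" using tT[OF assms(1)] .
  have i0: "0 \<le> i" using tS[OF assms(1,2)] in_Sh i_def by blast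
  have sx: "col (tile_start t) \<le> col x" "col x \<le> col (tile_end t)"
    using tileish_start[OF tt] tileish_end[OF tt] assms(2) by auto
  have s: "col (tile_start t) = s"
  proof (rule ccontr)
    assume ne: "col (tile_start t) \<noteq> s"
    show False
    proof (cases "col (tile_start t) < s")
      case True
      then have "cell A i (s - 1) \<in> t" using run_cells[OF assms(1,2), of "s - 1"] sx assms(3) i_def by simp
      then have "cell A i (s - 1) \<in> S" using tS assms by blast
      then show False using assms(4) i_def cell_in_Sh_nn by simp
    next
      case False
      define w where "w = tile_start t"
      have w: "w \<in> t" using tileish_start[OF tt] w_def by blast
      have lw: "lay A w = i" using lay_const[OF assms(1,2) w] i_def by simp
      have "cell A i (col w - 1) \<in> S" using assms(5) False ne sx i0 unfolding w_def i_def cell_in_Sh_nn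
        by auto
      then show False using no_left[OF assms(1) w] lw w_def by simp
    qed
  qed
  have "tile_start t = cell A i s"
    using tile_cell[OF assms(1,2)] tileish_start[OF tt] s i_def by metis
  then have "tile_ht t = phi A s + 2 * i" using dyck_ht[OF assms(1,2)] ht_cell_phi by simp
  moreover have "ht x = phi A (col x) + 2 * i" using ht_cell_phi[of A i "col x"] i_def by simp
  ultimately show ?thesis unfolding depth_def by simp
qed

end


definition betw :: "int \<Rightarrow> int \<Rightarrow> int \<Rightarrow> bool" where
  "betw a b c \<longleftrightarrow> (a \<le> c \<and> c \<le> b) \<or> (b \<le> c \<and> c \<le> a)"

lemma betw_split: "betw a b c \<Longrightarrow> betw a m c \<or> betw m b c" by (auto simp: betw_def)
lemma betw_sym: "betw a b c \<longleftrightarrow> betw b a c" by (auto simp: betw_def)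
lemma betw_refl: "betw a a a" by (simp add: betw_def)
lemma betw_mid: "b \<le> c \<Longrightarrow> c \<le> d \<Longrightarrow> betw a c c' \<Longrightarrow> betw a b c' \<or> betw a d c'"
  by (auto simp: betw_def)
lemma betw_mid2: "b \<le> c \<Longrightarrow> c \<le> d \<Longrightarrow> betw a b c \<or> betw a d c"
  by (auto simp: betw_def)

definition run :: "(int \<Rightarrow> int) \<Rightarrow> (int \<Rightarrow> int) \<Rightarrow> node \<Rightarrow> node set" where
  "run A B x = {y \<in> Sh A B. lay A y = lay A x \<and> (\<forall>c. betw (col x) (col y) c \<longrightarrow> lay A x < nn A B c)}"

locale goodctx =
  fixes A B :: "int \<Rightarrow> int"
  assumes stA: "stepf A" and stB: "stepf B" and AleB: "\<And>c. A c \<le> B c"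
    and fin: "finite (Sh A B)" and gl: "LeftC (nn A B) (phi A)" and gr: "RightC (nn A B) (phi A)"
begin

abbreviation "S \<equiv> Sh A B"

lemma R0: "x \<in> S \<Longrightarrow> x \<in> run A B x"
  unfolding run_def by (auto simp: betw_def in_Sh nn_def)

lemma R_mem: "y \<in> run A B x \<Longrightarrow> y \<in> S \<and> lay A y = lay A x \<and> (\<forall>c. betw (col x) (col y) c \<longrightarrow> lay A x < nn A B c)"
  unfolding run_def by blast

lemma R_trans:
  assumes "z \<in> run A B x" shows "run A B z = run A B x"
proof -
  have z: "lay A z = lay A x" "\<forall>c. betw (col x) (col z) c \<longrightarrow> lay A x < nn A B c"
    using R_mem[OF assms] by auto
  show ?thesis
  proof (intro set_eqI iffI)
    fix w assume "w \<in> run A B z"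
    then have w: "w \<in> S" "lay A w = lay A z" "\<forall>c. betw (col z) (col w) c \<longrightarrow> lay A z < nn A B c"
      using R_mem by auto
    have "\<forall>c. betw (col x) (col w) c \<longrightarrow> lay A x < nn A B c"
      using z w betw_split[of "col x" "col w" _ "col z"] by auto
    then show "w \<in> run A B x" using w z unfolding run_def by auto
  next
    fix w assume "w \<in> run A B x"
    then have w: "w \<in> S" "lay A w = lay A x" "\<forall>c. betw (col x) (col w) c \<longrightarrow> lay A x < nn A B c"
      using R_mem by auto
    have "\<forall>c. betw (col z) (col w) c \<longrightarrow> lay A z < nn A B c"
      using z w betw_split[of "col z" "col w" _ "col x"] betw_sym by metis
    then show "w \<in> run A B z" using w z unfolding run_def by auto
  qed
qed

lemma R_tileish:
  assumes xS: "x \<in> S" shows "tileish (run A B x)"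
proof -
  let ?t = "run A B x"
  have i0: "0 \<le> lay A x" using xS in_Sh by blast
  have "finite ?t" using fin unfolding run_def by (rule rev_finite_subset) auto
  moreover have "?t \<noteq> {}" using R0[OF xS] by blast
  moreover have "inj_on col ?t"
    by (rule inj_onI) (metis R_mem col_eq_lay_eq)
  moreover have "\<forall>y\<in>?t. \<forall>z\<in>?t. \<forall>c. col y \<le> c \<and> c \<le> col z \<longrightarrow> (\<exists>w\<in>?t. col w = c)"
  proof (intro ballI allI impI)
    fix y z c assume y: "y \<in> ?t" and z: "z \<in> ?t" and c: "col y \<le> c \<and> c \<le> col z"
    define w where "w = cell A (lay A x) c"
    have hy: "\<forall>c. betw (col x) (col y) c \<longrightarrow> lay A x < nn A B c" using R_mem[OF y] by blast
    have hz: "\<forall>c. betw (col x) (col z) c \<longrightarrow> lay A x < nn A B c" using R_mem[OF z] by blast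
    have hc: "\<forall>c'. betw (col x) c c' \<longrightarrow> lay A x < nn A B c'"
      using betw_mid[of "col y" c "col z" "col x"] c hy hz by blast
    have "lay A x < nn A B c" using hc betw_def by auto
    then have "w \<in> S" using i0 unfolding w_def cell_in_Sh_nn by simp
    then have "w \<in> ?t" using hc unfolding run_def w_def by simp
    then show "\<exists>w\<in>?t. col w = c" unfolding w_def by (intro bexI[of _ "cell A (lay A x) c"]) auto
  qed
  moreover have "\<forall>y\<in>?t. \<forall>z\<in>?t. col z = col y + 1 \<longrightarrow> z = NE y \<or> z = SE y"
  proof (intro ballI impI)
    fix y z assume y: "y \<in> ?t" and z: "z \<in> ?t" and c: "col z = col y + 1"
    have "lay A z = lay A y" using R_mem y z by simp
    then have "z = cell A (lay A y) (col y + 1)" using c by (metis cell_lay)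
    then show "z = NE y \<or> z = SE y"
      using stepf_D[OF stA, of "col y"]
      by (auto simp: cell_def NE_def SE_def lay_def col_def prod_eq_iff)
  qed
  ultimately show ?thesis unfolding tileish_def by blast
qed

lemma R_start:
  assumes xS: "x \<in> S"
  shows "tile_start (run A B x) \<in> run A B x \<and> col (tile_start (run A B x)) \<le> col x
     \<and> nn A B (col (tile_start (run A B x)) - 1) \<le> lay A x"
proof -
  let ?t = "run A B x" let ?s = "tile_start ?t"
  have st: "?s \<in> ?t" "\<forall>y\<in>?t. col ?s \<le> col y" using tileish_start[OF R_tileish[OF xS]] by auto
  have sx: "col ?s \<le> col x" using st R0[OF xS] by blast
  have i0: "0 \<le> lay A x" using xS in_Sh by blast
  have hs: "\<forall>c. betw (col x) (col ?s) c \<longrightarrow> lay A x < nn A B c" using R_mem[OF st(1)] by blast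
  have "nn A B (col ?s - 1) \<le> lay A x"
  proof (rule ccontr)
    assume "\<not> ?thesis"
    then have lt: "lay A x < nn A B (col ?s - 1)" by simp
    define w where "w = cell A (lay A x) (col ?s - 1)"
    have "w \<in> S" using lt i0 unfolding w_def cell_in_Sh_nn by simp
    moreover have "\<forall>c. betw (col x) (col w) c \<longrightarrow> lay A x < nn A B c"
    proof (intro allI impI)
      fix c assume "betw (col x) (col w) c"
      then have "c = col ?s - 1 \<or> betw (col x) (col ?s) c" using sx unfolding w_def betw_def by auto
      then show "lay A x < nn A B c" using lt hs by auto
    qed
    ultimately have "w \<in> ?t" unfolding run_def w_def by simp
    then show False using st(2) unfolding w_def by fastforce
  qed
  then show ?thesis using st sx by blast
qed

lemma R_end:
  assumes xS: "x \<in> S"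
  shows "tile_end (run A B x) \<in> run A B x \<and> col x \<le> col (tile_end (run A B x))
     \<and> nn A B (col (tile_end (run A B x)) + 1) \<le> lay A x"
proof -
  let ?t = "run A B x" let ?s = "tile_end ?t"
  have st: "?s \<in> ?t" "\<forall>y\<in>?t. col y \<le> col ?s" using tileish_end[OF R_tileish[OF xS]] by auto
  have sx: "col x \<le> col ?s" using st R0[OF xS] by blast
  have i0: "0 \<le> lay A x" using xS in_Sh by blast
  have hs: "\<forall>c. betw (col x) (col ?s) c \<longrightarrow> lay A x < nn A B c" using R_mem[OF st(1)] by blast
  have "nn A B (col ?s + 1) \<le> lay A x"
  proof (rule ccontr)
    assume "\<not> ?thesis"
    then have lt: "lay A x < nn A B (col ?s + 1)" by simp
    define w where "w = cell A (lay A x) (col ?s + 1)"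
    have "w \<in> S" using lt i0 unfolding w_def cell_in_Sh_nn by simp
    moreover have "\<forall>c. betw (col x) (col w) c \<longrightarrow> lay A x < nn A B c"
    proof (intro allI impI)
      fix c assume "betw (col x) (col w) c"
      then have "c = col ?s + 1 \<or> betw (col x) (col ?s) c" using sx unfolding w_def betw_def by auto
      then show "lay A x < nn A B c" using lt hs by auto
    qed
    ultimately have "w \<in> ?t" unfolding run_def w_def by simp
    then show False using st(2) unfolding w_def by fastforce
  qed
  then show ?thesis using st sx by blast
qed

lemma R_dyck:
  assumes xS: "x \<in> S" shows "is_dyck_tile (run A B x)"
proof -
  let ?t = "run A B x" let ?s = "tile_start ?t" let ?e = "tile_end ?t"
  define i where "i = lay A x"
  have tt: "tileish ?t" using R_tileish[OF xS] .
  have s: "?s \<in> ?t" "col ?s \<le> col x" "nn A B (col ?s - 1) \<le> i" using R_start[OF xS] i_def by auto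
  have e: "?e \<in> ?t" "col x \<le> col ?e" "nn A B (col ?e + 1) \<le> i" using R_end[OF xS] i_def by auto
  have ls: "lay A ?s = i" "lay A ?e = i" using R_mem s e i_def by auto
  have hs: "\<forall>c. betw (col x) (col ?s) c \<longrightarrow> i < nn A B c" using R_mem[OF s(1)] i_def by blast
  have he: "\<forall>c. betw (col x) (col ?e) c \<longrightarrow> i < nn A B c" using R_mem[OF e(1)] i_def by blast
  have bnd: "ht y \<le> ht ?s \<and> ht y \<le> ht ?e" if y: "y \<in> ?t" for y
  proof -
    have ly: "lay A y = i" "\<forall>c. betw (col x) (col y) c \<longrightarrow> i < nn A B c" using R_mem[OF y] i_def by auto
    have ys: "col ?s \<le> col y" "col y \<le> col ?e" using tileish_start[OF tt] tileish_end[OF tt] y by auto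
    have all: "i < nn A B c" if "col ?s \<le> c" "c \<le> col ?e" for c
      using that hs he s(2) e(2) unfolding betw_def by (cases "c \<le> col x") auto
    have "phi A (col y) \<le> phi A (col ?s)"
      using gl ys s(3) all unfolding LeftC_def
      by (meson dual_order.trans order_le_less_trans)
    moreover have "phi A (col y) \<le> phi A (col ?e)"
      using gr ys e(3) all unfolding RightC_def
      by (meson dual_order.trans order_le_less_trans)
    moreover have "ht y = phi A (col y) + 2 * i" "ht ?s = phi A (col ?s) + 2 * i" "ht ?e = phi A (col ?e) + 2 * i"
      using ht_cell_phi[of A "lay A z" "col z" for z] ly ls by (metis cell_lay)+
    ultimately show ?thesis by simp
  qed
  have fin_t: "finite ?t" using tt unfolding tileish_def by blast
  have "tile_ht ?t = ht ?s" unfolding tile_ht_def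
    by (rule Max_eqI) (use fin_t bnd s in auto)
  moreover have "ht ?e = ht ?s" using bnd s(1) e(1) by (simp add: eq_iff)
  ultimately show ?thesis unfolding is_dyck_tile_def using tileish_is_tile[OF tt] by simp
qed

definition "RT = run A B ` S"

lemma RT_tiling: "dyck_tiling RT S"
  unfolding dyck_tiling_def RT_def
proof (intro conjI)
  show "\<forall>t\<in>run A B ` S. is_dyck_tile t" using R_dyck by blast
  show "\<Union> (run A B ` S) = S" using R0 R_mem by blast
  show "\<forall>t\<in>run A B ` S. \<forall>u\<in>run A B ` S. t \<noteq> u \<longrightarrow> t \<inter> u = {}"
    using R_trans by blast
qed

lemma RT_tof: "x \<in> S \<Longrightarrow> tile_of RT x = run A B x"
  using tile_of_eq[OF RT_tiling] R0 unfolding RT_def by blast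

lemma RT_ce: "cover_expansive RT S"
  unfolding cover_expansive_def
proof (intro conjI allI impI)
  fix x assume a: "x \<in> S \<and> SE x \<in> S"
  let ?s = "tile_start (run A B x)"
  have s: "?s \<in> run A B x" "col ?s \<le> col x" using R_start a by auto
  have hs: "\<forall>c. betw (col x) (col ?s) c \<longrightarrow> lay A x < nn A B c" "lay A ?s = lay A x" using R_mem[OF s(1)] by auto
  define i' where "i' = lay A (SE x)"
  have i': "0 \<le> i'" "i' \<le> lay A x" "i' < nn A B (col x + 1)"
    using a stepf_D[OF stA, of "col x"] in_Sh[of "SE x" A B] unfolding i'_def lay_SE nn_def by auto
  define w where "w = cell A i' (col ?s)"
  have "w \<in> run A B (SE x)"
  proof -
    have "cell A i' (col ?s) \<in> S" using i' hs s unfolding cell_in_Sh_nn by (auto simp: betw_def)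
    moreover have "lay A (cell A i' (col ?s)) = lay A (SE x)" using i'_def by simp
    moreover have "\<forall>c. betw (col (SE x)) (col (cell A i' (col ?s))) c \<longrightarrow> lay A (SE x) < nn A B c"
    proof (intro allI impI)
    fix c assume "betw (col (SE x)) (col (cell A i' (col ?s))) c"
    then have "c = col x + 1 \<or> betw (col x) (col ?s) c" using s(2) by (auto simp: betw_def)
    then show "lay A (SE x) < nn A B c" using i' hs unfolding i'_def by auto
    qed
    ultimately show ?thesis unfolding run_def w_def by blast
  qed
  then have "col (tile_start (run A B (SE x))) \<le> col w"
    using tileish_start[OF R_tileish[OF conjunct2[OF a]]] by blast
  then show "col (tile_start (tile_of RT (SE x))) \<le> col (tile_start (tile_of RT x))"
    using RT_tof a w_def by simp
next
  fix x assume a: "x \<in> S \<and> SW x \<in> S"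
  let ?s = "tile_end (run A B x)"
  have s: "?s \<in> run A B x" "col x \<le> col ?s" using R_end a by auto
  have hs: "\<forall>c. betw (col x) (col ?s) c \<longrightarrow> lay A x < nn A B c" "lay A ?s = lay A x" using R_mem[OF s(1)] by auto
  define i' where "i' = lay A (SW x)"
  have i': "0 \<le> i'" "i' \<le> lay A x" "i' < nn A B (col x - 1)"
    using a stepf_D'[OF stA, of "col x"] in_Sh[of "SW x" A B] unfolding i'_def lay_SW nn_def by auto
  define w where "w = cell A i' (col ?s)"
  have "w \<in> run A B (SW x)"
  proof -
    have "cell A i' (col ?s) \<in> S" using i' hs s unfolding cell_in_Sh_nn by (auto simp: betw_def)
    moreover have "lay A (cell A i' (col ?s)) = lay A (SW x)" using i'_def by simp
    moreover have "\<forall>c. betw (col (SW x)) (col (cell A i' (col ?s))) c \<longrightarrow> lay A (SW x) < nn A B c"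
    proof (intro allI impI)
    fix c assume "betw (col (SW x)) (col (cell A i' (col ?s))) c"
    then have "c = col x - 1 \<or> betw (col x) (col ?s) c" using s(2) by (auto simp: betw_def)
    then show "lay A (SW x) < nn A B c" using i' hs unfolding i'_def by auto
    qed
    ultimately show ?thesis unfolding run_def w_def by blast
  qed
  then have "col w \<le> col (tile_end (run A B (SW x)))"
    using tileish_end[OF R_tileish[OF conjunct2[OF a]]] by blast
  then show "col (tile_end (tile_of RT x)) \<le> col (tile_end (tile_of RT (SW x)))"
    using RT_tof a w_def by simp
qed

lemma exists_ce: "\<exists>T. ce_dyck_tiling T S"
  using RT_tiling RT_ce unfolding ce_dyck_tiling_def by blast

end


lemma LeftC_D: "LeftC n f \<Longrightarrow> p \<le> c \<Longrightarrow> (\<And>c'. p \<le> c' \<Longrightarrow> c' \<le> c \<Longrightarrow> n (p - 1) < n c') \<Longrightarrow> f c \<le> f p"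
  unfolding LeftC_def by blast
lemma RightC_D: "RightC n f \<Longrightarrow> c \<le> q \<Longrightarrow> (\<And>c'. c \<le> c' \<Longrightarrow> c' \<le> q \<Longrightarrow> n (q + 1) < n c') \<Longrightarrow> f c \<le> f q"
  unfolding RightC_def by blast

lemma RightC_refl: "RightC n f \<longleftrightarrow> LeftC (\<lambda>c. n (- c)) (\<lambda>c. f (- c))"
proof
  assume R: "RightC n f"
  show "LeftC (\<lambda>c. n (- c)) (\<lambda>c. f (- c))" unfolding LeftC_def
  proof (intro allI impI)
    fix p c assume a: "p \<le> c \<and> (\<forall>c'. p \<le> c' \<and> c' \<le> c \<longrightarrow> n (- (p - 1)) < n (- c'))"
    have "f (- c) \<le> f (- p)"
    proof (rule RightC_D[OF R])
      show "- c \<le> - p" using a by simp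
      fix c' assume "- c \<le> c'" "c' \<le> - p"
      then show "n (- p + 1) < n c'" using a[THEN conjunct2, rule_format, of "- c'"] by simp
    qed
    then show "f (- c) \<le> f (- p)" .
  qed
next
  assume L: "LeftC (\<lambda>c. n (- c)) (\<lambda>c. f (- c))"
  show "RightC n f" unfolding RightC_def
  proof (intro allI impI)
    fix c q assume a: "c \<le> q \<and> (\<forall>c'. c \<le> c' \<and> c' \<le> q \<longrightarrow> n (q + 1) < n c')"
    have "f (- (- c)) \<le> f (- (- q))"
    proof (rule LeftC_D[OF L])
      show "- q \<le> - c" using a by simp
      fix c' assume "- q \<le> c'" "c' \<le> - c"
      then show "n (- (- q - 1)) < n (- c')" using a[THEN conjunct2, rule_format, of "- c'"] by (simp add: add.commute)
    qed
    then show "f c \<le> f q" by simp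
  qed
qed

lemma upd_refl: "(\<lambda>c::int. (g(j := v)) (- c)) = (\<lambda>c. g (- c))(- j := v)"
proof (rule ext)
  fix c show "(g(j := v)) (- c) = ((\<lambda>c. g (- c))(- j := v)) c" by (cases "c = - j") auto
qed

locale Hc =
  fixes n f :: "int \<Rightarrow> int" and j r s :: int
  assumes d1: "\<And>c. n c - n (c - 1) \<le> 1" and d2: "\<And>c. n (c - 1) - n c \<le> 1"
    and jL: "\<And>c. n c - n (c - 1) = 1 \<Longrightarrow> f (c - 1) = f c + 1"
    and jR: "\<And>c. n (c - 1) - n c = 1 \<Longrightarrow> f c = f (c - 1) + 1"
    and l1: "n (j - 1) = r" and l2: "n j = r" and l3: "n (j + 1) = r"
    and l4: "f (j - 1) = f j + 1" and l5: "f (j + 1) = f j + 1" and r1: "1 \<le> r"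
    and sj: "s \<le> j" and s1: "n (s - 1) \<le> r - 1" and s2: "\<And>c'. s \<le> c' \<Longrightarrow> c' \<le> j \<Longrightarrow> r \<le> n c'"
begin

lemma ns: "n (s - 1) = r - 1" "n s = r"
  using s1 s2[of s] sj d1[of s] s2[of s] by auto
lemma fs: "f (s - 1) = f s + 1" using jL[of s] ns by simp
lemma slt: "s < j" using sj ns l1 by (cases "s = j") auto

lemma E1a:
  assumes L: "LeftC n f" and fsj: "f s = f j + 1"
  shows "LeftC (n(j := r - 1)) (f(j := f j + 2))"
  unfolding LeftC_def
proof (intro allI impI)
  fix p c
  assume a: "p \<le> c \<and> (\<forall>c'. p \<le> c' \<and> c' \<le> c \<longrightarrow> (n(j := r - 1)) (p - 1) < (n(j := r - 1)) c')"
  have pc: "p \<le> c" using a by blast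
  have P: "\<And>c'. p \<le> c' \<Longrightarrow> c' \<le> c \<Longrightarrow> (n(j := r - 1)) (p - 1) < (n(j := r - 1)) c'" using a by blast
  show "(f(j := f j + 2)) c \<le> (f(j := f j + 2)) p"
  proof (cases "p = j")
    case True
    then show ?thesis using P[of j] pc l1 by simp
  next
    case pj: False
    show ?thesis
    proof (cases "p = j + 1")
      case True
      have "f c \<le> f s"
      proof (rule LeftC_D[OF L])
        show "s \<le> c" using True pc sj by simp
        fix c' assume "s \<le> c'" "c' \<le> c"
        then show "n (s - 1) < n c'" using ns s2[of c'] P[of c'] True by (cases "c' \<le> j") auto
      qed
      then show ?thesis using True pc fsj l5 by simp
    next
      case pj1: False
      have np: "(n(j := r - 1)) (p - 1) = n (p - 1)" using pj1 by simp
      show ?thesis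
      proof (cases "p \<le> j \<and> j \<le> c")
        case False
        have "f c \<le> f p"
        proof (rule LeftC_D[OF L pc])
          fix c' assume "p \<le> c'" "c' \<le> c"
          then show "n (p - 1) < n c'" using P[of c'] np False by (cases "c' = j") auto
        qed
        then show ?thesis using False pj pc by auto
      next
        case True
        have npj: "n (p - 1) < r - 1" using P[of j] True np by simp
        have Pn: "n (p - 1) < n c'" if "p \<le> c'" "c' \<le> c" for c'
          using P[OF that] np npj l2 by (cases "c' = j") auto
        have fcp: "f c \<le> f p" using LeftC_D[OF L pc Pn] by blast
        show ?thesis
        proof (cases "c = j")
          case False then show ?thesis using fcp pj by simp
        next
          case cj: True
          have ps: "p < s"
          proof (rule ccontr)
            assume "\<not> p < s"
            then have "p - 1 = s - 1 \<or> (s \<le> p - 1 \<and> p - 1 \<le> j)" using True pj by auto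
            then show False using ns npj s2[of "p - 1"] by auto
          qed
          have "f (s - 1) \<le> f p"
            using LeftC_D[OF L, of p "s - 1"] ps Pn slt cj by simp
          then show ?thesis using fs fsj cj pj by simp
        qed
      qed
    qed
  qed
qed

lemma E1b:
  assumes L: "LeftC (n(j := r - 1)) (f(j := f j + 2))" and fsj: "f s = f j + 1"
  shows "LeftC n f"
  unfolding LeftC_def
proof (intro allI impI)
  fix p c
  assume a: "p \<le> c \<and> (\<forall>c'. p \<le> c' \<and> c' \<le> c \<longrightarrow> n (p - 1) < n c')"
  have pc: "p \<le> c" using a by blast
  have P: "\<And>c'. p \<le> c' \<Longrightarrow> c' \<le> c \<Longrightarrow> n (p - 1) < n c'" using a by blast
  show "f c \<le> f p"
  proof (cases "p = j")
    case True
    then show ?thesis using P[of j] pc l1 l2 by simp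
  next
    case pj: False
    show ?thesis
    proof (cases "p = j + 1")
      case True
      have "(f(j := f j + 2)) c \<le> (f(j := f j + 2)) (j + 1)"
      proof (rule LeftC_D[OF L])
        show "j + 1 \<le> c" using True pc by simp
        fix c' assume "j + 1 \<le> c'" "c' \<le> c"
        then show "(n(j := r - 1)) (j + 1 - 1) < (n(j := r - 1)) c'" using P[of c'] True l2 by auto
      qed
      then show ?thesis using True pc by simp
    next
      case pj1: False
      show ?thesis
      proof (cases "p \<le> j \<and> j \<le> c")
        case False
        have "(f(j := f j + 2)) c \<le> (f(j := f j + 2)) p"
        proof (rule LeftC_D[OF L pc])
          fix c' assume "p \<le> c'" "c' \<le> c"
          then show "(n(j := r - 1)) (p - 1) < (n(j := r - 1)) c'" using P[of c'] pj1 False by auto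
        qed
        then show ?thesis using False pj pc by auto
      next
        case True
        have npj: "n (p - 1) < r" using P[of j] True l2 by simp
        show ?thesis
        proof (cases "n (p - 1) < r - 1")
          case True2: True
          have "(f(j := f j + 2)) c \<le> (f(j := f j + 2)) p"
          proof (rule LeftC_D[OF L pc])
            fix c' assume "p \<le> c'" "c' \<le> c"
            then show "(n(j := r - 1)) (p - 1) < (n(j := r - 1)) c'" using P[of c'] pj1 True2 by auto
          qed
          then show ?thesis using pj by (cases "c = j") auto
        next
          case False
          then have npr: "n (p - 1) = r - 1" using npj by simp
          have ps: "p = s"
          proof (rule ccontr)
            assume "p \<noteq> s"
            then have "p < s \<or> (s \<le> p - 1 \<and> p - 1 \<le> j)" using True by auto
            then show False
            proof
              assume "p < s"
              then show False using P[of "s - 1"] ns npr slt True by simp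
            next
              assume "s \<le> p - 1 \<and> p - 1 \<le> j"
              then show False using s2[of "p - 1"] npr by simp
            qed
          qed
          show ?thesis
          proof (cases "c < j")
            case True3: True
            have "(f(j := f j + 2)) c \<le> (f(j := f j + 2)) s"
            proof (rule LeftC_D[OF L])
              show "s \<le> c" using pc ps by simp
              fix c' assume "s \<le> c'" "c' \<le> c"
              then show "(n(j := r - 1)) (s - 1) < (n(j := r - 1)) c'" using P[of c'] ps True3 by auto
            qed
            then show ?thesis using True3 ps slt by simp
          next
            case False3: False
            show ?thesis
            proof (cases "c = j")
              case True then show ?thesis using ps fsj by simp
            next
              case False
              have "(f(j := f j + 2)) c \<le> (f(j := f j + 2)) (j + 1)"
              proof (rule LeftC_D[OF L])
                show "j + 1 \<le> c" using False False3 by simp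
                fix c' assume "j + 1 \<le> c'" "c' \<le> c"
                then show "(n(j := r - 1)) (j + 1 - 1) < (n(j := r - 1)) c'" using P[of c'] ps npr slt by auto
              qed
              then show ?thesis using False False3 ps fsj l5 by simp
            qed
          qed
        qed
      qed
    qed
  qed
qed

lemma E1c:
  assumes L: "LeftC (n(j := r - 1)) (f(j := f j + 2))" and R: "RightC (n(j := r - 1)) (f(j := f j + 2))"
  shows "f s = f j + 1"
proof -
  have "(f(j := f j + 2)) (j - 1) \<le> (f(j := f j + 2)) s"
  proof (rule LeftC_D[OF L])
    show "s \<le> j - 1" using slt by simp
    fix c' assume "s \<le> c'" "c' \<le> j - 1"
    then show "(n(j := r - 1)) (s - 1) < (n(j := r - 1)) c'" using s2[of c'] ns by auto
  qed
  moreover have "(f(j := f j + 2)) s \<le> (f(j := f j + 2)) (j - 1)"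
  proof (rule RightC_D[OF R])
    show "s \<le> j - 1" using slt by simp
    fix c' assume "s \<le> c'" "c' \<le> j - 1"
    then show "(n(j := r - 1)) (j - 1 + 1) < (n(j := r - 1)) c'" using s2[of c'] by auto
  qed
  ultimately show ?thesis using slt l4 by simp
qed

lemma E2a:
  assumes L: "LeftC n f" and fsj: "f j + 2 \<le> f s"
  shows "LeftC n (f(j := f j + 2))"
  unfolding LeftC_def
proof (intro allI impI)
  fix p c
  assume a: "p \<le> c \<and> (\<forall>c'. p \<le> c' \<and> c' \<le> c \<longrightarrow> n (p - 1) < n c')"
  have pc: "p \<le> c" using a by blast
  have P: "\<And>c'. p \<le> c' \<Longrightarrow> c' \<le> c \<Longrightarrow> n (p - 1) < n c'" using a by blast
  have pj: "p \<noteq> j" using P[of j] pc l1 l2 by auto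
  have fcp: "f c \<le> f p" using LeftC_D[OF L pc P] by blast
  show "(f(j := f j + 2)) c \<le> (f(j := f j + 2)) p"
  proof (cases "c = j")
    case False then show ?thesis using fcp pj by simp
  next
    case cj: True
    have npj: "n (p - 1) < r" using P[of j] pc cj l2 by simp
    have ps: "p \<le> s"
    proof (rule ccontr)
      assume "\<not> p \<le> s"
      then show False using s2[of "p - 1"] npj pc cj by simp
    qed
    show ?thesis
    proof (cases "p = s")
      case True then show ?thesis using fsj cj pj by simp
    next
      case False
      have "f (s - 1) \<le> f p" using LeftC_D[OF L, of p "s - 1"] ps False P slt cj by simp
      then show ?thesis using fs fsj cj pj by simp
    qed
  qed
qed

lemma E2b:
  assumes L: "LeftC n (f(j := f j + 2))"
  shows "LeftC n f"
  unfolding LeftC_def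
proof (intro allI impI)
  fix p c
  assume a: "p \<le> c \<and> (\<forall>c'. p \<le> c' \<and> c' \<le> c \<longrightarrow> n (p - 1) < n c')"
  have pc: "p \<le> c" using a by blast
  have P: "\<And>c'. p \<le> c' \<Longrightarrow> c' \<le> c \<Longrightarrow> n (p - 1) < n c'" using a by blast
  have pj: "p \<noteq> j" using P[of j] pc l1 l2 by auto
  have "(f(j := f j + 2)) c \<le> (f(j := f j + 2)) p" using LeftC_D[OF L pc P] by blast
  then show "f c \<le> f p" using pj by (cases "c = j") auto
qed

lemma E2c:
  assumes L: "LeftC n (f(j := f j + 2))"
  shows "f j + 2 \<le> f s"
proof -
  have "(f(j := f j + 2)) j \<le> (f(j := f j + 2)) s"
  proof (rule LeftC_D[OF L])
    show "s \<le> j" using sj .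
    fix c' assume "s \<le> c'" "c' \<le> j"
    then show "n (s - 1) < n c'" using s2[of c'] ns by auto
  qed
  then show ?thesis using slt by simp
qed

end

lemma Hc_refl:
  assumes "Hc n f j r s0"
    and e1: "j \<le> e" and e2: "n (e + 1) \<le> r - 1" and e3: "\<And>c'. j \<le> c' \<Longrightarrow> c' \<le> e \<Longrightarrow> r \<le> n c'"
  shows "Hc (\<lambda>c. n (- c)) (\<lambda>c. f (- c)) (- j) r (- e)"
proof -
  interpret Hc n f j r s0 by fact
  show ?thesis
  proof
    fix c
    show "n (- c) - n (- (c - 1)) \<le> 1" using d2[of "1 - c"] by simp
    show "n (- (c - 1)) - n (- c) \<le> 1" using d1[of "1 - c"] by simp
    show "n (- c) - n (- (c - 1)) = 1 \<Longrightarrow> f (- (c - 1)) = f (- c) + 1" using jR[of "1 - c"] by simp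
    show "n (- (c - 1)) - n (- c) = 1 \<Longrightarrow> f (- c) = f (- (c - 1)) + 1" using jL[of "1 - c"] by simp
  next
    show "n (- (- j - 1)) = r" using l3 by (simp add: add.commute)
    show "n (- (- j)) = r" using l2 by simp
    show "n (- (- j + 1)) = r" using l1 by simp
    show "f (- (- j - 1)) = f (- (- j)) + 1" using l5 by (simp add: add.commute)
    show "f (- (- j + 1)) = f (- (- j)) + 1" using l4 by simp
    show "1 \<le> r" using r1 .
    show "- e \<le> - j" using e1 by simp
    show "n (- (- e - 1)) \<le> r - 1" using e2 by (simp add: add.commute)
    fix c' assume "- e \<le> c'" "c' \<le> - j"
    then show "r \<le> n (- c')" using e3[of "- c'"] by simp
  qed
qed

lemma Eeq:
  assumes L: "LeftC n f" and R: "RightC n f"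
    and "s \<le> e" "n (s - 1) < r" "n (e + 1) < r" "\<And>c'. s \<le> c' \<Longrightarrow> c' \<le> e \<Longrightarrow> r \<le> n c'"
  shows "f s = f e"
proof -
  have "f e \<le> f s" using LeftC_D[OF L, of s e] assms by fastforce
  moreover have "f s \<le> f e" using RightC_D[OF R, of s e] assms by fastforce
  ultimately show ?thesis by simp
qed



lemma part_pos: "is_partition D \<Longrightarrow> x \<in> D \<Longrightarrow> 1 \<le> fst x \<and> 1 \<le> snd x"
  unfolding is_partition_def young_def by auto

lemma part_down:
  assumes "is_partition D" "x \<in> D" "1 \<le> fst y" "1 \<le> snd y" "fst y \<le> fst x" "snd y \<le> snd x"
  shows "y \<in> D"
proof -
  obtain ls where ls: "sorted_wrt (\<ge>) ls" "D = young ls" using assms(1) unfolding is_partition_def by blast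
  obtain a b where x: "x = (a, b)" by (cases x)
  obtain c d where y: "y = (c, d)" by (cases y)
  have xa: "1 \<le> a" "a \<le> int (length ls)" "1 \<le> b" "b \<le> int (ls ! nat (a - 1))"
    using assms(2) ls(2) x unfolding young_def by auto
  have "ls ! nat (a - 1) \<le> ls ! nat (c - 1)"
  proof (cases "c = a")
    case True then show ?thesis by simp
  next
    case False
    then have "nat (c - 1) < nat (a - 1)" "nat (a - 1) < length ls" using assms(3,5) xa x y by auto
    then show ?thesis using ls(1) unfolding sorted_wrt_iff_nth_less by blast
  qed
  then show ?thesis using xa assms(3-6) x y ls(2) unfolding young_def by auto
qed

lemma part_finite: "is_partition D \<Longrightarrow> finite D"
proof -
  assume "is_partition D"
  then obtain ls where D: "D = young ls" unfolding is_partition_def by blast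
  have "young ls \<subseteq> Sigma {1..int (length ls)} (\<lambda>a. {1..int (ls ! nat (a - 1))})"
    unfolding young_def by auto
  then show "finite D" using D by (auto intro: finite_subset)
qed

definition Dh :: "node set \<Rightarrow> node set" where "Dh D = {x. fst x \<le> 0 \<or> snd x \<le> 0 \<or> x \<in> D}"

lemma Dh_down: "is_partition D \<Longrightarrow> x \<in> Dh D \<Longrightarrow> fst y \<le> fst x \<Longrightarrow> snd y \<le> snd x \<Longrightarrow> y \<in> Dh D"
  unfolding Dh_def using part_down[of D x y] by force

lemma thresh:
  fixes P :: "int \<Rightarrow> bool"
  assumes down: "\<And>a a'. P a \<Longrightarrow> a' \<le> a \<Longrightarrow> P a'" and "P a1" "\<not> P a2"
  shows "\<exists>al. \<forall>a. P a \<longleftrightarrow> a < al"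
  using assms(2,3)
proof (induction "nat (a2 - a1)" arbitrary: a1 rule: less_induct)
  case less
  have lt: "a1 < a2"
  proof (rule ccontr)
    assume "\<not> a1 < a2" then have "a2 \<le> a1" by simp
    then show False using less.prems down[of a1 a2] by simp
  qed
  show ?case
  proof (cases "P (a1 + 1)")
    case True
    have "nat (a2 - (a1 + 1)) < nat (a2 - a1)" using lt by simp
    then show ?thesis using less.hyps[OF _ True less.prems(2)] by blast
  next
    case False
    have "\<forall>a. P a \<longleftrightarrow> a < a1 + 1"
    proof
      fix a show "P a \<longleftrightarrow> a < a1 + 1"
      proof
        assume "P a" then show "a < a1 + 1" using False down[of a "a1 + 1"] by force
      next
        assume "a < a1 + 1" then show "P a" using less.prems(1) down[of a1 a] by simp
      qed
    qed
    then show ?thesis by blast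
  qed
qed



definition alpha :: "node set \<Rightarrow> int \<Rightarrow> int" where
  "alpha D c = (THE al. \<forall>a. (a, a + c) \<in> Dh D \<longleftrightarrow> a < al)"

lemma alpha_char:
  assumes "is_partition D" shows "(a, a + c) \<in> Dh D \<longleftrightarrow> a < alpha D c"
proof -
  define P where "P a \<longleftrightarrow> (a, a + c) \<in> Dh D" for a
  have down: "\<And>a a'. P a \<Longrightarrow> a' \<le> a \<Longrightarrow> P a'" unfolding P_def using Dh_down[OF assms] by fastforce
  have p1: "P (min 0 (- c))" unfolding P_def Dh_def by auto
  have fD: "finite D" using part_finite[OF assms] .
  define K where "K = Max (insert 0 (fst ` D))"
  have K0: "0 \<le> K" unfolding K_def using fD by simp
  have Kx: "\<And>x. x \<in> D \<Longrightarrow> fst x \<le> K" unfolding K_def using fD by simp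
  define M where "M = K + 1 + \<bar>c\<bar>"
  have "(M, M + c) \<notin> D" using Kx[of "(M, M + c)"] unfolding M_def by auto
  moreover have "0 < M" "0 < M + c" using K0 unfolding M_def by auto
  ultimately have p2: "\<not> P M" unfolding P_def Dh_def by auto
  obtain al where al: "\<forall>a. P a \<longleftrightarrow> a < al" using thresh[of P "min 0 (- c)" M] down p1 p2 by blast
  have "alpha D c = al" unfolding alpha_def
  proof (rule the_equality)
    show "\<forall>a. (a, a + c) \<in> Dh D \<longleftrightarrow> a < al" using al P_def by simp
    fix al' assume "\<forall>a. (a, a + c) \<in> Dh D \<longleftrightarrow> a < al'"
    then have "\<forall>a. a < al' \<longleftrightarrow> a < al" using al P_def by simp
    then show "al' = al" by (metis linorder_neqE_linordered_idom order_less_irrefl)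
  qed
  then show ?thesis using al P_def by simp
qed

lemma Dh_col: "is_partition D \<Longrightarrow> x \<in> Dh D \<longleftrightarrow> fst x < alpha D (col x)"
  using alpha_char[of D "fst x" "col x"] by (simp add: col_def)

lemma alpha_step: assumes "is_partition D" shows "stepf (alpha D)"
  unfolding stepf_def
proof
  fix c
  define a where "a = alpha D c"
  have "(a - 1, a - 1 + c) \<in> Dh D" using alpha_char[OF assms] a_def by simp
  then have "(a - 2, a - 2 + (c + 1)) \<in> Dh D" using Dh_down[OF assms] by fastforce
  then have g: "a - 2 < alpha D (c + 1)" using alpha_char[OF assms] by blast
  have "(a, a + c) \<notin> Dh D" using alpha_char[OF assms] a_def by simp
  then have "(a, a + (c + 1)) \<notin> Dh D" using Dh_down[OF assms] by fastforce
  then have "\<not> a < alpha D (c + 1)" using alpha_char[OF assms] by blast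
  then show "alpha D (c + 1) = alpha D c \<or> alpha D (c + 1) = alpha D c - 1" using g a_def by auto
qed

lemma alpha_mono: "is_partition D \<Longrightarrow> is_partition E \<Longrightarrow> D \<subseteq> E \<Longrightarrow> alpha D c \<le> alpha E c"
proof -
  assume pD: "is_partition D" and pE: "is_partition E" and sub: "D \<subseteq> E"
  have "(alpha D c - 1, alpha D c - 1 + c) \<in> Dh D" using alpha_char[OF pD] by simp
  then have "(alpha D c - 1, alpha D c - 1 + c) \<in> Dh E" using sub unfolding Dh_def by auto
  then show ?thesis using alpha_char[OF pE] by fastforce
qed



lemma diff_Sh:
  assumes "is_partition L" "is_partition M"
  shows "L - M = Sh (alpha M) (alpha L)"
proof (intro set_eqI iffI)
  fix x assume x: "x \<in> L - M"
  then have pos: "1 \<le> fst x \<and> 1 \<le> snd x" using part_pos assms by blast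
  have "x \<in> Dh L" using x unfolding Dh_def by auto
  moreover have xM: "x \<notin> M" using x by blast
  have "x \<notin> Dh M" using xM pos by (simp add: Dh_def)
  ultimately show "x \<in> Sh (alpha M) (alpha L)" using Dh_col assms \<open>x \<notin> Dh M\<close> unfolding Sh_def by fastforce
next
  fix x assume "x \<in> Sh (alpha M) (alpha L)"
  then have "alpha M (col x) \<le> fst x" "fst x < alpha L (col x)" unfolding Sh_def by auto
  then have "x \<in> Dh L" "x \<notin> Dh M" using Dh_col[OF assms(1), of x] Dh_col[OF assms(2), of x] by auto
  then show "x \<in> L - M" unfolding Dh_def by auto
qed

lemma alpha_insert:
  assumes pD: "is_partition D" and pD': "is_partition (insert z D)" and zD: "z \<notin> D" and cz: "col z = j"
  shows "alpha D j = fst z" "alpha (insert z D) j = fst z + 1"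
    "\<And>c. c \<noteq> j \<Longrightarrow> alpha (insert z D) c = alpha D c"
    "alpha D (j - 1) = fst z + 1" "alpha D (j + 1) = fst z"
proof -
  have zp: "1 \<le> fst z \<and> 1 \<le> snd z" using part_pos[OF pD'] by blast
  have zform: "z = (fst z, fst z + j)" using cz by (simp add: col_def prod_eq_iff)
  have Dh_ins: "Dh (insert z D) = insert z (Dh D)" unfolding Dh_def by auto
  have zn: "z \<notin> Dh D" using zD zp unfolding Dh_def by auto
  have lo: "alpha D j \<le> fst z" using Dh_col[OF pD, of z] zn cz by simp
  have hi1: "fst z < alpha (insert z D) j" using Dh_col[OF pD', of z] Dh_ins cz by simp
  have below: "(a, a + j) \<in> Dh D" if "a < fst z" for a
  proof -
    have sz: "snd z = fst z + j" using cz by (simp add: col_def)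
    have "z \<in> Dh (insert z D)" using Dh_ins by simp
    then have "(a, a + j) \<in> Dh (insert z D)" using Dh_down[OF pD', of z "(a, a + j)"] that sz by simp
    moreover have "(a, a + j) \<noteq> z" using that by auto
    ultimately show ?thesis using Dh_ins by auto
  qed
  have "fst z \<le> alpha D j"
  proof (rule ccontr)
    assume "\<not> ?thesis"
    then show False using below[of "alpha D j"] alpha_char[OF pD, of "alpha D j" j] by simp
  qed
  then show aj: "alpha D j = fst z" using lo by simp
  have "(fst z + 1, fst z + 1 + j) \<notin> Dh (insert z D)"
    using Dh_ins alpha_char[OF pD, of "fst z + 1" j] aj by (auto simp: prod_eq_iff)
  then have "\<not> fst z + 1 < alpha (insert z D) j" using alpha_char[OF pD'] by blast
  then show "alpha (insert z D) j = fst z + 1" using hi1 by simp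
  show "\<And>c. c \<noteq> j \<Longrightarrow> alpha (insert z D) c = alpha D c"
  proof -
    fix c assume cj: "c \<noteq> j"
    have "\<forall>a. (a, a + c) \<in> Dh (insert z D) \<longleftrightarrow> (a, a + c) \<in> Dh D"
      using Dh_ins cj zform by (auto simp: prod_eq_iff)
    then have "\<forall>a. a < alpha (insert z D) c \<longleftrightarrow> a < alpha D c"
      using alpha_char[OF pD] alpha_char[OF pD'] by blast
    then show "alpha (insert z D) c = alpha D c" by (metis linorder_neqE_linordered_idom order_less_irrefl)
  qed
  have st: "stepf (alpha D)" using alpha_step[OF pD] .
  have "SW z \<in> Dh (insert z D)" using Dh_down[OF pD', of z "SW z"] Dh_ins by (simp add: SW_def)
  then have "SW z \<in> Dh D" using Dh_ins by (auto simp: SW_def prod_eq_iff)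
  then have "fst z < alpha D (j - 1)" using Dh_col[OF pD] cz by simp
  then show "alpha D (j - 1) = fst z + 1" using stepf_D'[OF st, of j] aj by auto
  have "SE z \<in> Dh (insert z D)" using Dh_down[OF pD', of z "SE z"] Dh_ins by (simp add: SE_def)
  then have "SE z \<in> Dh D" using Dh_ins by (auto simp: SE_def prod_eq_iff)
  then have "fst z - 1 < alpha D (j + 1)" using Dh_col[OF pD] cz by simp
  then show "alpha D (j + 1) = fst z" using stepf_D[OF st, of j] aj by auto
qed



lemma ex_left:
  fixes P :: "int \<Rightarrow> bool" and c0 :: int
  assumes fin: "finite {c. P c}" and "P c0"
  shows "\<exists>s\<le>c0. \<not> P (s - 1) \<and> (\<forall>c'. s \<le> c' \<and> c' \<le> c0 \<longrightarrow> P c')"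
proof (rule ccontr)
  assume H: "\<not> ?thesis"
  have all: "\<forall>c'. c0 - int k \<le> c' \<and> c' \<le> c0 \<longrightarrow> P c'" for k
  proof (induction k)
    case 0 then show ?case using assms(2) by auto
  next
    case (Suc k)
    have H': "\<And>s. s \<le> c0 \<Longrightarrow> (\<forall>c'. s \<le> c' \<and> c' \<le> c0 \<longrightarrow> P c') \<Longrightarrow> P (s - 1)"
      using H by blast
    have "P (c0 - int k - 1)" using H'[of "c0 - int k"] Suc.IH by simp
    then show ?case
    proof (intro allI impI)
      fix c' assume "P (c0 - int k - 1)" "c0 - int (Suc k) \<le> c' \<and> c' \<le> c0"
      then show "P c'" using Suc.IH by (cases "c' = c0 - int k - 1") auto
    qed
  qed
  have "P (c0 - int k)" for k using spec[OF all[of k], of "c0 - int k"] by simp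
  then have "range (\<lambda>k. c0 - int k) \<subseteq> {c. P c}" by auto
  moreover have "infinite (range (\<lambda>k::nat. c0 - int k))"
  proof
    assume "finite (range (\<lambda>k::nat. c0 - int k))"
    then have "finite (UNIV :: nat set)" by (rule finite_imageD) (simp add: inj_on_def)
    then show False by simp
  qed
  ultimately show False using fin finite_subset by blast
qed

lemma ex_right:
  fixes P :: "int \<Rightarrow> bool" and c0 :: int
  assumes fin: "finite {c. P c}" and "P c0"
  shows "\<exists>e\<ge>c0. \<not> P (e + 1) \<and> (\<forall>c'. c0 \<le> c' \<and> c' \<le> e \<longrightarrow> P c')"
proof -
  have "finite {c. P (- c)}"
  proof -
    have "finite (uminus -` {c. P c})" by (rule finite_vimageI[OF fin]) (simp add: inj_def)
    then show ?thesis by (simp add: vimage_def)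
  qed
  then obtain s where s0: "s \<le> - c0" "\<not> P (- (s - 1))" "\<forall>c'. s \<le> c' \<and> c' \<le> - c0 \<longrightarrow> P (- c')"
    using ex_left[of "\<lambda>c. P (- c)" "- c0"] assms(2) by auto
  have s1: "c0 \<le> - s" using s0(1) by simp
  have s2: "\<not> P (- s + 1)" using s0(2) by simp
  have s3: "P c'" if "c0 \<le> c'" "c' \<le> - s" for c'
    using s0(3)[rule_format, of "- c'"] that by simp
  show ?thesis using s1 s2 s3 by blast
qed



lemma RightC_refl2: "RightC (\<lambda>c. n (- c)) (\<lambda>c. f (- c)) \<longleftrightarrow> LeftC n f"
  using RightC_refl[of "\<lambda>c. n (- c)" "\<lambda>c. f (- c)"] by simp

theorem proposition4p6:
  fixes j :: int and lam mu :: "node set" and l m :: node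
  assumes "is_partition lam" and "is_partition mu"
    and "addable lam l" and "col l = j"
    and "addable mu m" and "col m = j"
    and "insert m mu \<subseteq> lam"
  shows "((\<exists>T. ce_dyck_tiling T (lam - mu) \<and>
              (\<exists>t\<in>T. (fst l - 1, snd l - 1) \<in> t \<and> depth t (fst l - 1, snd l - 1) = 1))
          \<longleftrightarrow> (\<exists>T. ce_dyck_tiling T (lam - insert m mu)))
       \<and> ((\<exists>T. ce_dyck_tiling T (lam - mu) \<and>
              (\<exists>t\<in>T. (fst l - 1, snd l - 1) \<in> t \<and> depth t (fst l - 1, snd l - 1) > 1))
          \<longleftrightarrow> (\<exists>T. ce_dyck_tiling T (insert l lam - insert m mu)))"
proof -
  note pL = assms(1) and pM = assms(2)
  have pL': "is_partition (insert l lam)" and lnl: "l \<notin> lam" using assms(3) unfolding addable_def by auto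
  have pM': "is_partition (insert m mu)" and mnm: "m \<notin> mu" using assms(5) unfolding addable_def by auto
  define A where "A = alpha mu"
  define A' where "A' = alpha (insert m mu)"
  define B where "B = alpha lam"
  define B' where "B' = alpha (insert l lam)"
  note iL = alpha_insert[OF pL pL' lnl assms(4)]
  note iM = alpha_insert[OF pM pM' mnm assms(6)]
  have Bj: "B j = fst l" "B' j = fst l + 1" "\<And>c. c \<noteq> j \<Longrightarrow> B' c = B c"
    "B (j - 1) = fst l + 1" "B (j + 1) = fst l" using iL unfolding B_def B'_def by auto
  have Aj: "A j = fst m" "A' j = fst m + 1" "\<And>c. c \<noteq> j \<Longrightarrow> A' c = A c"
    "A (j - 1) = fst m + 1" "A (j + 1) = fst m" using iM unfolding A_def A'_def by auto
  have mL: "m \<in> lam" using assms(7) by blast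
  have "1 \<le> fst m \<and> 1 \<le> snd m" using part_pos[OF pL mL] .
  then have "m \<in> Dh lam" using mL unfolding Dh_def by auto
  then have mlt: "fst m < fst l" using Dh_col[OF pL, of m] assms(6) Bj(1) unfolding B_def by simp
  define r where "r = fst l - fst m"
  have r1: "1 \<le> r" using mlt r_def by simp
  have stA: "stepf A" "stepf A'" "stepf B" "stepf B'"
    using alpha_step pL pL' pM pM' unfolding A_def A'_def B_def B'_def by auto
  have muL: "mu \<subseteq> lam" using assms(7) by blast
  have le: "\<And>c. A c \<le> B c" "\<And>c. A' c \<le> B c" "\<And>c. A' c \<le> B' c"
    using alpha_mono[OF pM pL muL] alpha_mono[OF pM' pL assms(7)] alpha_mono[OF pM' pL'] assms(7)
    unfolding A_def A'_def B_def B'_def by auto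
  have S0: "lam - mu = Sh A B" using diff_Sh[OF pL pM] A_def B_def by simp
  have S1: "lam - insert m mu = Sh A' B" using diff_Sh[OF pL pM'] A'_def B_def by simp
  have S2: "insert l lam - insert m mu = Sh A' B'" using diff_Sh[OF pL' pM'] A'_def B'_def by simp
  have finL: "finite lam" "finite (insert l lam)" using part_finite pL pL' by auto
  have fin: "finite (Sh A B)" "finite (Sh A' B)" "finite (Sh A' B')"
    using S0 S1 S2 finL by (metis finite_Diff)+
  define n0 where "n0 = nn A B"
  define f0 where "f0 = phi A"
  have n1: "nn A' B = n0(j := r - 1)"
    by (rule ext) (simp add: n0_def nn_def Aj(2,3) Bj(1) r_def)
  have f1: "phi A' = f0(j := f0 j + 2)"
    by (rule ext) (simp add: f0_def phi_def Aj(2,3) Aj(1))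
  have n2: "nn A' B' = n0"
  proof (rule ext)
    fix c show "nn A' B' c = n0 c"
      by (cases "c = j") (simp_all add: n0_def nn_def Aj(2,3) Bj(1,2,3) Aj(1))
  qed
  have n0j: "n0 (j - 1) = r" "n0 j = r" "n0 (j + 1) = r"
    using Aj Bj unfolding n0_def nn_def r_def by auto
  have f0j: "f0 (j - 1) = f0 j + 1" "f0 (j + 1) = f0 j + 1"
    using Aj unfolding f0_def phi_def by auto
  define a where "a = (fst l - 1, snd l - 1)"
  have a_cell: "a = cell A (r - 1) j"
    using assms(4) Aj(1) unfolding a_def cell_def r_def col_def by (simp add: prod_eq_iff)
  have aS: "a \<in> Sh A B" unfolding a_cell cell_in_Sh_nn using r1 n0j(2) n0_def by simp
  have la: "lay A a = r - 1" "col a = j" using a_cell by simp_all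
  have finP: "finite {c. r - 1 < n0 c}"
  proof (rule finite_subset[OF _ finite_imageI[OF fin(1), of col]])
    show "{c. r - 1 < n0 c} \<subseteq> col ` Sh A B"
    proof
      fix c assume "c \<in> {c. r - 1 < n0 c}"
      then have "cell A (r - 1) c \<in> Sh A B" using r1 unfolding cell_in_Sh_nn n0_def by simp
      then show "c \<in> col ` Sh A B" by (metis col_cell imageI)
    qed
  qed
  obtain s where s: "s \<le> j" "\<not> r - 1 < n0 (s - 1)" "\<forall>c'. s \<le> c' \<and> c' \<le> j \<longrightarrow> r - 1 < n0 c'"
    using ex_left[OF finP, of j] n0j by auto
  obtain e where e: "j \<le> e" "\<not> r - 1 < n0 (e + 1)" "\<forall>c'. j \<le> c' \<and> c' \<le> e \<longrightarrow> r - 1 < n0 c'"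
    using ex_right[OF finP, of j] n0j by auto
  have H: "Hc n0 f0 j r s"
  proof
    fix c
    show "n0 c - n0 (c - 1) \<le> 1" "n0 (c - 1) - n0 c \<le> 1"
      using stepf_D'[OF stA(1), of c] stepf_D'[OF stA(3), of c] unfolding n0_def nn_def by auto
    show "n0 c - n0 (c - 1) = 1 \<Longrightarrow> f0 (c - 1) = f0 c + 1"
      using stepf_D'[OF stA(1), of c] stepf_D'[OF stA(3), of c] unfolding n0_def nn_def f0_def phi_def by auto
    show "n0 (c - 1) - n0 c = 1 \<Longrightarrow> f0 c = f0 (c - 1) + 1"
      using stepf_D'[OF stA(1), of c] stepf_D'[OF stA(3), of c] unfolding n0_def nn_def f0_def phi_def by auto
  next
    show "n0 (j - 1) = r" "n0 j = r" "n0 (j + 1) = r" using n0j by auto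
    show "f0 (j - 1) = f0 j + 1" "f0 (j + 1) = f0 j + 1" using f0j by auto
    show "1 \<le> r" using r1 .
    show "s \<le> j" using s by simp
    show "n0 (s - 1) \<le> r - 1" using s by simp
    fix c' assume "s \<le> c'" "c' \<le> j" then show "r \<le> n0 c'" using s by auto
  qed
  have Hr: "Hc (\<lambda>c. n0 (- c)) (\<lambda>c. f0 (- c)) (- j) r (- e)"
  proof (rule Hc_refl[OF H])
    show "j \<le> e" using e by simp
    show "n0 (e + 1) \<le> r - 1" using e by simp
    fix c' assume "j \<le> c'" "c' \<le> e" then show "r \<le> n0 c'" using e by auto
  qed
  interpret H: Hc n0 f0 j r s by (rule H)
  interpret Hr: Hc "\<lambda>c. n0 (- c)" "\<lambda>c. f0 (- c)" "- j" r "- e" by (rule Hr)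
  have Hr_fe: "f0 e = f0 (- (- e))" by simp
  have depth_a: "depth t a = f0 s - f0 j" if "ce_dyck_tiling T (Sh A B)" "t \<in> T" "a \<in> t" for T t
  proof -
    interpret cectx A B T using stA(1,3) that(1) le(1) by unfold_locales auto
    show ?thesis
      using depth_formula[OF that(2,3), of s] s la unfolding n0_def f0_def by auto
  qed
  have good_of: "LeftC (nn X Y) (phi X) \<and> RightC (nn X Y) (phi X)"
    if "ce_dyck_tiling T (Sh X Y)" "stepf X" "stepf Y" "\<And>c. X c \<le> Y c" for X Y T
  proof -
    interpret cectx X Y T using that by unfold_locales auto
    show ?thesis using good_left good_right by blast
  qed
  have ce_of: "\<exists>T. ce_dyck_tiling T (Sh X Y)"
    if "stepf X" "stepf Y" "\<And>c. X c \<le> Y c" "finite (Sh X Y)" "LeftC (nn X Y) (phi X)" "RightC (nn X Y) (phi X)"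
    for X Y
  proof -
    interpret goodctx X Y using that by unfold_locales auto
    show ?thesis using exists_ce .
  qed
  have eqse: "f0 s = f0 e" if "LeftC n0 f0" "RightC n0 f0"
  proof (rule Eeq[OF that, of s e r])
    show "s \<le> e" using s e by simp
    show "n0 (s - 1) < r" "n0 (e + 1) < r" using s e by auto
    fix c' assume "s \<le> c'" "c' \<le> e"
    then show "r \<le> n0 c'" using s(3)[rule_format, of c'] e(3)[rule_format, of c'] by (cases "c' \<le> j") auto
  qed
  have RL: "RightC g h \<longleftrightarrow> LeftC (\<lambda>c. g (- c)) (\<lambda>c. h (- c))" for g h using RightC_refl .
  have upd: "(\<lambda>c. (n0(j := r - 1)) (- c)) = (\<lambda>c. n0 (- c))(- j := r - 1)"
    "(\<lambda>c. (f0(j := f0 j + 2)) (- c)) = (\<lambda>c. f0 (- c))(- j := (\<lambda>c. f0 (- c)) (- j) + 2)"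
    using upd_refl[of n0 j "r - 1"] upd_refl[of f0 j "f0 j + 2"] by simp_all
  have upd2: "(\<lambda>c. (f0(j := f0 j + 2)) (- c)) = (\<lambda>c. f0 (- c))(- j := (\<lambda>c. f0 (- c)) (- j) + 2)"
    using upd(2) .
  show ?thesis
  proof (intro conjI iffI)
    assume "\<exists>T. ce_dyck_tiling T (lam - mu) \<and> (\<exists>t\<in>T. (fst l - 1, snd l - 1) \<in> t \<and> depth t (fst l - 1, snd l - 1) = 1)"
    then obtain T t where T: "ce_dyck_tiling T (Sh A B)" "t \<in> T" "a \<in> t" "depth t a = 1"
      using S0 a_def by auto
    have fs: "f0 s = f0 j + 1" using depth_a[OF T(1-3)] T(4) by simp
    have G: "LeftC n0 f0" "RightC n0 f0" using good_of[OF T(1) stA(1,3) le(1)] n0_def f0_def by auto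
    have L1: "LeftC (n0(j := r - 1)) (f0(j := f0 j + 2))" using H.E1a[OF G(1) fs] .
    have "LeftC ((\<lambda>c. n0 (- c))(- j := r - 1)) ((\<lambda>c. f0 (- c))(- j := (\<lambda>c. f0 (- c)) (- j) + 2))"
      using Hr.E1a G(2) RL eqse[OF G] fs by simp
    then have R1: "RightC (n0(j := r - 1)) (f0(j := f0 j + 2))" using RL upd by simp
    show "\<exists>T. ce_dyck_tiling T (lam - insert m mu)"
      using ce_of[OF stA(2,3) le(2) fin(2)] L1 R1 n1 f1 S1 by simp
  next
    assume "\<exists>T. ce_dyck_tiling T (lam - insert m mu)"
    then obtain T where T: "ce_dyck_tiling T (Sh A' B)" using S1 by auto
    have G1: "LeftC (n0(j := r - 1)) (f0(j := f0 j + 2))" "RightC (n0(j := r - 1)) (f0(j := f0 j + 2))"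
      using good_of[OF T stA(2,3) le(2)] n1 f1 by auto
    have fs: "f0 s = f0 j + 1" using H.E1c[OF G1] .
    have L0: "LeftC n0 f0" using H.E1b[OF G1(1) fs] .
    have G1r: "LeftC ((\<lambda>c. n0 (- c))(- j := r - 1)) ((\<lambda>c. f0 (- c))(- j := (\<lambda>c. f0 (- c)) (- j) + 2))"
      "RightC ((\<lambda>c. n0 (- c))(- j := r - 1)) ((\<lambda>c. f0 (- c))(- j := (\<lambda>c. f0 (- c)) (- j) + 2))"
      using G1 RL[of "n0(j := r - 1)" "f0(j := f0 j + 2)"] upd RightC_refl2[of "n0(j := r - 1)" "f0(j := f0 j + 2)"]
      by simp_all
    have fe: "f0 e = f0 j + 1" using Hr.E1c[OF G1r] by simp
    have R0: "RightC n0 f0" using Hr.E1b[OF G1r(1)] fe RL by simp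
    obtain T0 where T0: "ce_dyck_tiling T0 (Sh A B)"
      using ce_of[OF stA(1,3) le(1) fin(1)] L0 R0 n0_def f0_def by auto
    interpret c0: cectx A B T0 using stA(1,3) T0 le(1) by unfold_locales auto
    have t: "tile_of T0 a \<in> T0" "a \<in> tile_of T0 a" using c0.tofin[OF aS] by auto
    show "\<exists>T. ce_dyck_tiling T (lam - mu) \<and> (\<exists>t\<in>T. (fst l - 1, snd l - 1) \<in> t \<and> depth t (fst l - 1, snd l - 1) = 1)"
      using T0 t depth_a[OF T0 t] fs S0 a_def by auto
  next
    assume "\<exists>T. ce_dyck_tiling T (lam - mu) \<and> (\<exists>t\<in>T. (fst l - 1, snd l - 1) \<in> t \<and> depth t (fst l - 1, snd l - 1) > 1)"
    then obtain T t where T: "ce_dyck_tiling T (Sh A B)" "t \<in> T" "a \<in> t" "depth t a > 1"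
      using S0 a_def by auto
    have fs: "f0 j + 2 \<le> f0 s" using depth_a[OF T(1-3)] T(4) by simp
    have G: "LeftC n0 f0" "RightC n0 f0" using good_of[OF T(1) stA(1,3) le(1)] n0_def f0_def by auto
    have L1: "LeftC n0 (f0(j := f0 j + 2))" using H.E2a[OF G(1) fs] .
    have "LeftC (\<lambda>c. n0 (- c)) ((\<lambda>c. f0 (- c))(- j := (\<lambda>c. f0 (- c)) (- j) + 2))"
      using Hr.E2a G(2) RL eqse[OF G] fs by simp
    then have R1: "RightC n0 (f0(j := f0 j + 2))" using RL upd by simp
    show "\<exists>T. ce_dyck_tiling T (insert l lam - insert m mu)"
      using ce_of[OF stA(2,4) le(3) fin(3)] L1 R1 n2 f1 S2 by simp
  next
    assume "\<exists>T. ce_dyck_tiling T (insert l lam - insert m mu)"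
    then obtain T where T: "ce_dyck_tiling T (Sh A' B')" using S2 by auto
    have G1: "LeftC n0 (f0(j := f0 j + 2))" "RightC n0 (f0(j := f0 j + 2))"
      using good_of[OF T stA(2,4) le(3)] n2 f1 by auto
    have fs: "f0 j + 2 \<le> f0 s" using H.E2c[OF G1(1)] .
    have L0: "LeftC n0 f0" using H.E2b[OF G1(1)] .
    have G1r: "LeftC (\<lambda>c. n0 (- c)) ((\<lambda>c. f0 (- c))(- j := (\<lambda>c. f0 (- c)) (- j) + 2))"
      using G1(2) RL[of n0 "f0(j := f0 j + 2)"] upd by simp
    have R0: "RightC n0 f0" using Hr.E2b[OF G1r] RL by simp
    obtain T0 where T0: "ce_dyck_tiling T0 (Sh A B)"
      using ce_of[OF stA(1,3) le(1) fin(1)] L0 R0 n0_def f0_def by auto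
    interpret c0: cectx A B T0 using stA(1,3) T0 le(1) by unfold_locales auto
    have t: "tile_of T0 a \<in> T0" "a \<in> tile_of T0 a" using c0.tofin[OF aS] by auto
    have d: "1 < depth (tile_of T0 a) a" using depth_a[OF T0 t] fs by simp
    show "\<exists>T. ce_dyck_tiling T (lam - mu) \<and> (\<exists>t\<in>T. (fst l - 1, snd l - 1) \<in> t \<and> depth t (fst l - 1, snd l - 1) > 1)"
      unfolding S0 a_def[symmetric] using T0 t d by blast
  qed
qed


end
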